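(* Let $(\mathcal M,g)$ be an oriented three-dimensional (pseudo-)Riemannian manifold and suppose that at every point $\Phi_{ab}$ is of Petrov type D, i.e. it has exactly two distinct principal null structures $\mathcal N$ and $\mathcal N'$, each of multiplicity exactly $2$. Let $k^a$, $\ell^a$ be generators of $\mathcal N$, $\mathcal N'$ respectively, and suppose $$k^ak^b\left(A_{abc}+3g_{bc}\nabla_aS\right)=0,\qquad \ell^a\ell^b\left(A_{abc}+3g_{bc}\nabla_aS\right)=0.$$ Then both $\mathcal N$ and $\mathcal N'$ are co-geodetic.
   Context: Abstract index notation; $\nabla$ the Levi-Civita connection; brackets denote (skew-)symmetrisation with weight $1/2$. $R_{abd}{}^cV^d=2\nabla_{[a}\nabla_{b]}V^c$, $R_{ab}=R_{acb}{}^c$, $R=R_a{}^a$, $\Phi_{ab}=R_{ab}-\frac13Rg_{ab}$, $S=\frac1{12}R$, Cotton tensor $A_{abc}=-2\nabla_{[b}\Phi_{c]a}+2g_{a[b}\nabla_{c]}S$. $g,\nabla$ extended complex-(bi)linearly to $T^{\mathbb C}\mathcal M$. A null structure is a complex line subbundle $\mathcal N\subset T^{\mathbb C}\mathcal M$ with $g(k,k)=0$ for all sections; a generator is a nowhere-vanishing section; $\mathcal N^\perp$ its orthogonal complement. $\mathcal N$ is co-geodetic if $g(\nabla_XY,Z)=0$ for all sections $X,Y$ of $\mathcal N^\perp$, $Z$ of $\mathcal N$. Principal null structures: for a null structure with generator $k$, pick a frame $(k,\ell,n)$ with $g(k,\ell)=1$, $g(n,n)=-\frac12$, other pairings zero;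 $\Phi_0=\frac12\Phi_{ab}k^ak^b$, $\Phi_1=\frac12\Phi_{ab}k^an^b$, $\Phi_2=\frac12\Phi_{ab}k^a\ell^b$, $\Phi_3=\frac12\Phi_{ab}\ell^an^b$, $\Phi_4=\frac12\Phi_{ab}\ell^a\ell^b$; $\Phi(z)=\Phi_0+4\Phi_1z+6\Phi_2z^2+4\Phi_3z^3+\Phi_4z^4=\frac12\Phi_{ab}\xi^a\xi^b$ with $\xi(z)=k+2zn+z^2\ell$, so null directions correspond to $z\in\mathbb{CP}^1$ and the roots of $\Phi$ (with multiplicity) are the principal null structures. Type D: two distinct roots each of multiplicity 2; in a frame with $k,\ell$ generating the two, $\Phi_0=\Phi_1=\Phi_3=\Phi_4=0\neq\Phi_2$. *)

theory Defs
  imports "HOL-Analysis.Analysis"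
begin

text \<open>Local coordinate model: the manifold is an open set U of real^3, tensors are
given by their components in the coordinate frame (indices of type 3).
Complex vector fields are maps U -> complex^3.\<close>

type_synonym pt = "real^3"

definition pd :: "3 \<Rightarrow> (pt \<Rightarrow> 'b::real_normed_vector) \<Rightarrow> pt \<Rightarrow> 'b" where
  "pd i f x = vector_derivative (\<lambda>t. f (x + t *\<^sub>R axis i 1)) (at 0)"

coinductive smooth_on :: "pt set \<Rightarrow> (pt \<Rightarrow> 'b::real_normed_vector) \<Rightarrow> bool" where
  "f differentiable_on U \<Longrightarrow> (\<forall>i. smooth_on U (pd i f)) \<Longrightarrow> smooth_on U f"

definition metric_on :: "pt set \<Rightarrow> (pt \<Rightarrow> 3 \<Rightarrow> 3 \<Rightarrow> real) \<Rightarrow> bool" where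
  "metric_on U g \<longleftrightarrow> open U \<and> (\<forall>i j. smooth_on U (\<lambda>x. g x i j)) \<and>
     (\<forall>x\<in>U. \<forall>i j. g x i j = g x j i) \<and>
     (\<forall>x\<in>U. det (\<chi> i j. g x i j) \<noteq> 0)"

definition ginv :: "(pt \<Rightarrow> 3 \<Rightarrow> 3 \<Rightarrow> real) \<Rightarrow> pt \<Rightarrow> 3 \<Rightarrow> 3 \<Rightarrow> real" where
  "ginv g x i j = matrix_inv (\<chi> a b. g x a b) $ i $ j"

text \<open>Christoffel symbols Gamma^c_{ab} = chr g x c a b.\<close>
definition chr :: "(pt \<Rightarrow> 3 \<Rightarrow> 3 \<Rightarrow> real) \<Rightarrow> pt \<Rightarrow> 3 \<Rightarrow> 3 \<Rightarrow> 3 \<Rightarrow> real" where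
  "chr g x c a b = (\<Sum>d\<in>UNIV. ginv g x c d *
      (pd a (\<lambda>y. g y b d) x + pd b (\<lambda>y. g y a d) x - pd d (\<lambda>y. g y a b) x)) / 2"

text \<open>Riemann tensor R_{abd}^c = riem g x a b d c, with R_{abd}^c V^d = 2 nabla_[a nabla_b] V^c.\<close>
definition riem :: "(pt \<Rightarrow> 3 \<Rightarrow> 3 \<Rightarrow> real) \<Rightarrow> pt \<Rightarrow> 3 \<Rightarrow> 3 \<Rightarrow> 3 \<Rightarrow> 3 \<Rightarrow> real" where
  "riem g x a b d c = pd a (\<lambda>y. chr g y c b d) x - pd b (\<lambda>y. chr g y c a d) x
     + (\<Sum>e\<in>UNIV. chr g x c a e * chr g x e b d - chr g x c b e * chr g x e a d)"

definition ric :: "(pt \<Rightarrow> 3 \<Rightarrow> 3 \<Rightarrow> real) \<Rightarrow> pt \<Rightarrow> 3 \<Rightarrow> 3 \<Rightarrow> real" where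
  "ric g x a b = (\<Sum>c\<in>UNIV. riem g x a c b c)"

definition scal :: "(pt \<Rightarrow> 3 \<Rightarrow> 3 \<Rightarrow> real) \<Rightarrow> pt \<Rightarrow> real" where
  "scal g x = (\<Sum>a\<in>UNIV. \<Sum>b\<in>UNIV. ginv g x a b * ric g x a b)"

definition Phi :: "(pt \<Rightarrow> 3 \<Rightarrow> 3 \<Rightarrow> real) \<Rightarrow> pt \<Rightarrow> 3 \<Rightarrow> 3 \<Rightarrow> real" where
  "Phi g x a b = ric g x a b - scal g x * g x a b / 3"

definition Sc :: "(pt \<Rightarrow> 3 \<Rightarrow> 3 \<Rightarrow> real) \<Rightarrow> pt \<Rightarrow> real" where
  "Sc g x = scal g x / 12"

definition nablaPhi :: "(pt \<Rightarrow> 3 \<Rightarrow> 3 \<Rightarrow> real) \<Rightarrow> pt \<Rightarrow> 3 \<Rightarrow> 3 \<Rightarrow> 3 \<Rightarrow> real" where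
  "nablaPhi g x b c a = pd b (\<lambda>y. Phi g y c a) x
     - (\<Sum>e\<in>UNIV. chr g x e b c * Phi g x e a + chr g x e b a * Phi g x c e)"

definition cotton :: "(pt \<Rightarrow> 3 \<Rightarrow> 3 \<Rightarrow> real) \<Rightarrow> pt \<Rightarrow> 3 \<Rightarrow> 3 \<Rightarrow> 3 \<Rightarrow> real" where
  "cotton g x a b c = - (nablaPhi g x b c a - nablaPhi g x c b a)
     + (g x a b * pd c (Sc g) x - g x a c * pd b (Sc g) x)"

definition gC :: "(pt \<Rightarrow> 3 \<Rightarrow> 3 \<Rightarrow> real) \<Rightarrow> pt \<Rightarrow> complex^3 \<Rightarrow> complex^3 \<Rightarrow> complex" where
  "gC g x u v = (\<Sum>a\<in>UNIV. \<Sum>b\<in>UNIV. complex_of_real (g x a b) * u $ a * v $ b)"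

definition PhiC :: "(pt \<Rightarrow> 3 \<Rightarrow> 3 \<Rightarrow> real) \<Rightarrow> pt \<Rightarrow> complex^3 \<Rightarrow> complex^3 \<Rightarrow> complex" where
  "PhiC g x u v = (\<Sum>a\<in>UNIV. \<Sum>b\<in>UNIV. complex_of_real (Phi g x a b) * u $ a * v $ b)"

definition covD :: "(pt \<Rightarrow> 3 \<Rightarrow> 3 \<Rightarrow> real) \<Rightarrow> (pt \<Rightarrow> complex^3) \<Rightarrow> (pt \<Rightarrow> complex^3) \<Rightarrow> pt \<Rightarrow> complex^3" where
  "covD g X Y x = (\<chi> c. \<Sum>a\<in>UNIV. X x $ a *
      (pd a (\<lambda>y. Y y $ c) x + (\<Sum>b\<in>UNIV. complex_of_real (chr g x c a b) * Y x $ b)))"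

definition vfield :: "pt set \<Rightarrow> (pt \<Rightarrow> complex^3) \<Rightarrow> bool" where
  "vfield U X \<longleftrightarrow> (\<forall>c. smooth_on U (\<lambda>y. X y $ c))"

definition null_generator :: "pt set \<Rightarrow> (pt \<Rightarrow> 3 \<Rightarrow> 3 \<Rightarrow> real) \<Rightarrow> (pt \<Rightarrow> complex^3) \<Rightarrow> bool" where
  "null_generator U g k \<longleftrightarrow> vfield U k \<and> (\<forall>x\<in>U. k x \<noteq> 0 \<and> gC g x (k x) (k x) = 0)"

text \<open>Co-geodetic: g(nabla_X Y, Z) = 0 for all sections X, Y of N-perp and Z of N,
where N is the line bundle spanned by the generator k.\<close>
definition co_geodetic :: "pt set \<Rightarrow> (pt \<Rightarrow> 3 \<Rightarrow> 3 \<Rightarrow> real) \<Rightarrow> (pt \<Rightarrow> complex^3) \<Rightarrow> bool" where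
  "co_geodetic U g k \<longleftrightarrow>
     (\<forall>X Y Z. vfield U X \<and> vfield U Y \<and> vfield U Z \<and>
        (\<forall>x\<in>U. gC g x (X x) (k x) = 0) \<and> (\<forall>x\<in>U. gC g x (Y x) (k x) = 0) \<and>
        (\<forall>x\<in>U. \<exists>c. Z x = c *s k x)
      \<longrightarrow> (\<forall>x\<in>U. gC g x (covD g X Y x) (Z x) = 0))"

definition null_frame :: "(pt \<Rightarrow> 3 \<Rightarrow> 3 \<Rightarrow> real) \<Rightarrow> pt \<Rightarrow> complex^3 \<Rightarrow> complex^3 \<Rightarrow> complex^3 \<Rightarrow> bool" where
  "null_frame g x k l n \<longleftrightarrow>
     gC g x k k = 0 \<and> gC g x l l = 0 \<and> gC g x k l = 1 \<and>
     gC g x k n = 0 \<and> gC g x l n = 0 \<and> gC g x n n = - 1/2"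

text \<open>Phi is of type D at x with the null directions spanned by k and l as its two
(double) principal null structures: after normalising l so that g(k,l)=1, in a null frame
(k,l,n) one has Phi_0 = Phi_1 = Phi_3 = Phi_4 = 0 and Phi_2 nonzero.\<close>
definition typeD_at :: "(pt \<Rightarrow> 3 \<Rightarrow> 3 \<Rightarrow> real) \<Rightarrow> pt \<Rightarrow> complex^3 \<Rightarrow> complex^3 \<Rightarrow> bool" where
  "typeD_at g x k l \<longleftrightarrow> gC g x k l \<noteq> 0 \<and>
     (let l' = (1 / gC g x k l) *s l in
      \<exists>n. null_frame g x k l' n \<and>
        PhiC g x k k / 2 = 0 \<and> PhiC g x k n / 2 = 0 \<and> PhiC g x l' n / 2 = 0 \<and>
        PhiC g x l' l' / 2 = 0 \<and> PhiC g x k l' / 2 \<noteq> 0)"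

end

theory Submission
  imports Defs
begin


lemma pd_deriv:
  assumes "(f has_derivative f') (at x)"
  shows "pd i f x = f' (axis i 1)"
proof -
  have l: "((\<lambda>t::real. x + t *\<^sub>R axis i 1) has_derivative (\<lambda>t. t *\<^sub>R axis i 1)) (at 0)"
    by (auto intro!: derivative_eq_intros)
  have f0: "(f has_derivative f') (at (x + 0 *\<^sub>R axis i 1))" using assms by simp
  have "((\<lambda>t::real. f (x + t *\<^sub>R axis i 1)) has_derivative (\<lambda>t. f' (t *\<^sub>R axis i 1))) (at 0)"
    using diff_chain_at[OF l f0] by (simp add: o_def)
  moreover have "(\<lambda>t. f' (t *\<^sub>R axis i 1)) = (\<lambda>t. t *\<^sub>R f' (axis i 1))"
    using assms by (simp add: has_derivative_def linear_simps(5) linear_cmul)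
  ultimately have "((\<lambda>t::real. f (x + t *\<^sub>R axis i 1)) has_vector_derivative f' (axis i 1)) (at 0)"
    by (simp add: has_vector_derivative_def)
  then show ?thesis unfolding pd_def by (rule vector_derivative_at)
qed

lemma pd_frechet:
  assumes "f differentiable (at x)"
  shows "pd i f x = frechet_derivative f (at x) (axis i 1)"
  using assms frechet_derivative_works pd_deriv by blast

lemma pd_add:
  assumes "f differentiable (at x)" "h differentiable (at x)"
  shows "pd i (\<lambda>y. f y + h y) x = pd i f x + pd i h x"
  using has_derivative_add[OF assms[unfolded frechet_derivative_works]]
  by (simp add: pd_deriv pd_frechet assms)

lemma pd_diff:
  assumes "f differentiable (at x)" "h differentiable (at x)"
  shows "pd i (\<lambda>y. f y - h y) x = pd i f x - pd i h x"
  using has_derivative_diff[OF assms[unfolded frechet_derivative_works]]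
  by (simp add: pd_deriv pd_frechet assms)

lemma pd_minus:
  assumes "f differentiable (at x)"
  shows "pd i (\<lambda>y. - f y) x = - pd i f x"
  using has_derivative_minus[OF assms[unfolded frechet_derivative_works]]
  by (simp add: pd_deriv pd_frechet assms)

lemma pd_mult:
  fixes f h :: "pt \<Rightarrow> 'a::real_normed_algebra"
  assumes "f differentiable (at x)" "h differentiable (at x)"
  shows "pd i (\<lambda>y. f y * h y) x = pd i f x * h x + f x * pd i h x"
  using has_derivative_mult[OF assms[unfolded frechet_derivative_works]]
  by (simp add: pd_deriv pd_frechet assms)

lemma pd_const: "pd i (\<lambda>y. c) x = 0"
  using pd_deriv[OF has_derivative_const[of c "at x"], of i] by simp

lemma pd_sum:
  assumes "finite A" "\<And>a. a \<in> A \<Longrightarrow> f a differentiable (at x)"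
  shows "pd i (\<lambda>y. \<Sum>a\<in>A. f a y) x = (\<Sum>a\<in>A. pd i (f a) x)"
proof -
  have "((\<lambda>y. \<Sum>a\<in>A. f a y) has_derivative (\<lambda>h. \<Sum>a\<in>A. frechet_derivative (f a) (at x) h)) (at x)"
    using assms by (intro has_derivative_sum) (simp add: frechet_derivative_works[symmetric])
  then show ?thesis using assms by (simp add: pd_deriv pd_frechet)
qed

lemma pd_inverse:
  fixes f :: "pt \<Rightarrow> 'a::real_normed_div_algebra"
  assumes "f differentiable (at x)" "f x \<noteq> 0"
  shows "pd i (\<lambda>y. inverse (f y)) x = - (inverse (f x) * pd i f x * inverse (f x))"
  using Deriv.has_derivative_inverse[OF assms(2) assms(1)[unfolded frechet_derivative_works]]
  by (simp add: pd_deriv pd_frechet assms)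

lemma pd_of_real:
  fixes f :: "pt \<Rightarrow> real"
  assumes "f differentiable (at x)"
  shows "pd i (\<lambda>y. (of_real (f y) :: 'a::real_normed_algebra_1)) x = of_real (pd i f x)"
proof -
  have "((\<lambda>y. (of_real (f y) :: 'a)) has_derivative (\<lambda>h. of_real (frechet_derivative f (at x) h))) (at x)"
    using bounded_linear.has_derivative[OF bounded_linear_of_real assms[unfolded frechet_derivative_works]] .
  then show ?thesis using assms by (simp add: pd_deriv pd_frechet)
qed

lemma pd_local:
  assumes "open U" "x \<in> U" "\<And>y. y \<in> U \<Longrightarrow> f y = h y" "f differentiable (at x)"
  shows "pd i f x = pd i h x"
proof -
  have "(h has_derivative frechet_derivative f (at x)) (at x)"
    using has_derivative_transform_within_open[OF assms(4)[unfolded frechet_derivative_works] assms(1,2)] assms(3)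
    by blast
  then show ?thesis using assms by (simp add: pd_deriv pd_frechet)
qed

lemma pd_zero_on:
  assumes "open U" "x \<in> U" "\<And>y. y \<in> U \<Longrightarrow> f y = 0"
  shows "pd i f x = 0"
proof -
  have "pd i (\<lambda>y. 0) x = pd i f x"
    by (rule pd_local[OF assms(1,2)]) (use assms(3) in auto)
  then show ?thesis by (simp add: pd_const)
qed

lemma diff_on_at: "f differentiable_on U \<Longrightarrow> open U \<Longrightarrow> x \<in> U \<Longrightarrow> f differentiable (at x)"
  by (metis at_within_open differentiable_on_def)

lemma smooth_on_D:
  assumes "smooth_on U f"
  shows "f differentiable_on U" "smooth_on U (pd i f)"
  using assms by (auto elim: smooth_on.cases)

inductive sm :: "pt set \<Rightarrow> (pt \<Rightarrow> real) \<Rightarrow> bool" for U where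
  sm_base: "smooth_on U f \<Longrightarrow> sm U f"
| sm_const: "sm U (\<lambda>_. c)"
| sm_add: "sm U f \<Longrightarrow> sm U h \<Longrightarrow> sm U (\<lambda>y. f y + h y)"
| sm_mult: "sm U f \<Longrightarrow> sm U h \<Longrightarrow> sm U (\<lambda>y. f y * h y)"
| sm_inv: "sm U f \<Longrightarrow> (\<forall>y\<in>U. f y \<noteq> 0) \<Longrightarrow> sm U (\<lambda>y. inverse (f y))"
| sm_cong: "sm U f \<Longrightarrow> (\<forall>y\<in>U. f y = h y) \<Longrightarrow> sm U h"

lemma sm_step:
  assumes "open U" "sm U f"
  shows "f differentiable_on U \<and> (\<forall>i. sm U (pd i f))"
  using assms(2)
proof induction
  case (sm_base f)
  then show ?case by (auto intro: sm.sm_base dest: smooth_on_D)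
next
  case (sm_const c)
  then show ?case by (auto simp: pd_const intro: sm.sm_const)
next
  case (sm_add f h)
  have d: "(\<lambda>y. f y + h y) differentiable_on U" using sm_add by (auto intro: differentiable_on_add)
  moreover have "sm U (pd i (\<lambda>y. f y + h y))" for i
  proof (rule sm_cong)
    show "sm U (\<lambda>y. pd i f y + pd i h y)" using sm_add by (auto intro: sm.sm_add)
    show "\<forall>y\<in>U. pd i f y + pd i h y = pd i (\<lambda>y. f y + h y) y"
      using sm_add assms(1) by (auto simp: pd_add diff_on_at)
  qed
  ultimately show ?case by auto
next
  case (sm_mult f h)
  have d: "(\<lambda>y. f y * h y) differentiable_on U" using sm_mult by (auto intro: differentiable_on_mult)
  moreover have "sm U (pd i (\<lambda>y. f y * h y))" for i
  proof (rule sm_cong)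
    show "sm U (\<lambda>y. pd i f y * h y + f y * pd i h y)" using sm_mult by (intro sm.sm_add sm.sm_mult) auto
    show "\<forall>y\<in>U. pd i f y * h y + f y * pd i h y = pd i (\<lambda>y. f y * h y) y"
      using sm_mult assms(1) by (auto simp: pd_mult diff_on_at)
  qed
  ultimately show ?case by auto
next
  case (sm_inv f)
  have d: "(\<lambda>y. inverse (f y)) differentiable_on U" using sm_inv
    by (auto simp: differentiable_on_def intro!: differentiable_inverse)
  moreover have "sm U (pd i (\<lambda>y. inverse (f y)))" for i
  proof (rule sm_cong)
    show "sm U (\<lambda>y. (-1) * (inverse (f y) * pd i f y * inverse (f y)))"
      using sm_inv by (intro sm.sm_mult sm.sm_const sm.sm_inv) auto
    show "\<forall>y\<in>U. (-1) * (inverse (f y) * pd i f y * inverse (f y)) = pd i (\<lambda>y. inverse (f y)) y"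
      using sm_inv assms(1) by (auto simp: pd_inverse diff_on_at)
  qed
  ultimately show ?case by auto
next
  case (sm_cong f h)
  have d: "h differentiable_on U"
    unfolding differentiable_on_def
  proof
    fix y assume y: "y \<in> U"
    from sm_cong diff_on_at assms(1) y obtain D where "(f has_derivative D) (at y)"
      unfolding differentiable_def by blast
    then have "(h has_derivative D) (at y)"
      by (rule has_derivative_transform_within_open[OF _ assms(1) y]) (use sm_cong in auto)
    then show "h differentiable at y within U"
      using differentiable_def has_derivative_at_withinI by blast
  qed
  moreover have "sm U (pd i h)" for i
  proof (rule sm.sm_cong)
    show "sm U (pd i f)" using sm_cong by auto
    show "\<forall>y\<in>U. pd i f y = pd i h y"
      using sm_cong assms(1) by (auto intro!: pd_local[OF assms(1)] simp: diff_on_at)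
  qed
  ultimately show ?case by auto
qed

lemma sm_smooth:
  assumes "open U" "sm U f"
  shows "smooth_on U f"
  using assms
proof (coinduction arbitrary: f)
  case (smooth_on f)
  then show ?case using sm_step[OF smooth_on(1,2)] by auto
qed

lemma sm_sum: "finite A \<Longrightarrow> (\<And>a. a \<in> A \<Longrightarrow> sm U (f a)) \<Longrightarrow> sm U (\<lambda>y. \<Sum>a\<in>A. f a y)"
proof (induction A rule: finite_induct)
  case empty
  then show ?case using sm_const[of U 0] by simp
next
  case (insert a A)
  then show ?case using sm_add[of U "f a" "\<lambda>y. \<Sum>a\<in>A. f a y"] by simp
qed

lemma sm_diff: "sm U f \<Longrightarrow> sm U h \<Longrightarrow> sm U (\<lambda>y. f y - h y)"
proof -
  assume a: "sm U f" "sm U h"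
  have "sm U (\<lambda>y. f y + (\<lambda>_. -1) y * h y)" by (intro sm_add sm_mult sm_const a)
  then show ?thesis by (rule sm_cong) auto
qed

lemma sm_divide: "sm U f \<Longrightarrow> sm U h \<Longrightarrow> \<forall>y\<in>U. h y \<noteq> 0 \<Longrightarrow> sm U (\<lambda>y. f y / h y)"
proof -
  assume a: "sm U f" "sm U h" "\<forall>y\<in>U. h y \<noteq> 0"
  have "sm U (\<lambda>y. f y * inverse (h y))" by (intro sm_mult sm_inv a)
  then show ?thesis by (rule sm_cong) (auto simp: divide_inverse)
qed

lemma sm_cmult: "sm U f \<Longrightarrow> sm U (\<lambda>y. c * f y)"
  using sm_mult[OF sm_const] by blast

lemma sm_pd: "open U \<Longrightarrow> sm U f \<Longrightarrow> sm U (pd i f)"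
  using sm_step by blast

lemma sm_diffble: "open U \<Longrightarrow> sm U f \<Longrightarrow> x \<in> U \<Longrightarrow> f differentiable (at x)"
  using sm_step diff_on_at by blast


lemma line_deriv:
  fixes f :: "pt \<Rightarrow> real"
  assumes "f differentiable (at (y + s *\<^sub>R axis i 1))"
  shows "((\<lambda>t. f (y + t *\<^sub>R axis i 1)) has_real_derivative pd i f (y + s *\<^sub>R axis i 1)) (at s)"
proof -
  let ?z = "y + s *\<^sub>R axis i 1"
  let ?f' = "frechet_derivative f (at ?z)"
  have F: "(f has_derivative ?f') (at ?z)" using assms frechet_derivative_works by blast
  have l: "((\<lambda>t::real. y + t *\<^sub>R axis i 1) has_derivative (\<lambda>t. t *\<^sub>R axis i 1)) (at s)"
    by (auto intro!: derivative_eq_intros)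
  have "((\<lambda>t. f (y + t *\<^sub>R axis i 1)) has_derivative (\<lambda>t. ?f' (t *\<^sub>R axis i 1))) (at s)"
    using diff_chain_at[OF l F] by (simp add: o_def)
  moreover have "(\<lambda>t. ?f' (t *\<^sub>R axis i 1)) = (\<lambda>t. ?f' (axis i 1) * t)"
    using F by (auto simp: has_derivative_def linear_simps(5) mult.commute)
  ultimately show ?thesis
    using pd_frechet[OF assms, of i] by (simp add: has_field_derivative_def)
qed

lemma mvt_square:
  fixes f :: "pt \<Rightarrow> real"
  assumes h: "0 < h"
    and sq: "\<And>s t. 0 \<le> s \<Longrightarrow> s \<le> h \<Longrightarrow> 0 \<le> t \<Longrightarrow> t \<le> h \<Longrightarrow> x + s *\<^sub>R axis i 1 + t *\<^sub>R axis j 1 \<in> S"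
    and df: "\<And>z. z \<in> S \<Longrightarrow> f differentiable (at z)"
    and dfi: "\<And>z. z \<in> S \<Longrightarrow> pd i f differentiable (at z)"
  shows "\<exists>s t. 0 < s \<and> s < h \<and> 0 < t \<and> t < h \<and>
     f (x + h *\<^sub>R axis i 1 + h *\<^sub>R axis j 1) - f (x + h *\<^sub>R axis i 1) - f (x + h *\<^sub>R axis j 1) + f x
       = h * h * pd j (pd i f) (x + s *\<^sub>R axis i 1 + t *\<^sub>R axis j 1)"
proof -
  let ?u = "axis i 1 :: pt" and ?v = "axis j 1 :: pt"
  define \<phi> where "\<phi> s = f ((x + h *\<^sub>R ?v) + s *\<^sub>R ?u) - f (x + s *\<^sub>R ?u)" for s
  have "DERIV \<phi> s :> pd i f ((x + h *\<^sub>R ?v) + s *\<^sub>R ?u) - pd i f (x + s *\<^sub>R ?u)"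
    if "0 \<le> s" "s \<le> h" for s
  proof -
    have "(x + h *\<^sub>R ?v) + s *\<^sub>R ?u \<in> S" using sq[of s h] that h by (simp add: algebra_simps)
    moreover have "x + s *\<^sub>R ?u \<in> S" using sq[of s 0] that h by simp
    ultimately show ?thesis unfolding \<phi>_def
      by (intro DERIV_diff line_deriv df)
  qed
  from MVT2[OF h this] obtain s1 where s1: "0 < s1" "s1 < h"
    and e1: "\<phi> h - \<phi> 0 = (h - 0) * (pd i f ((x + h *\<^sub>R ?v) + s1 *\<^sub>R ?u) - pd i f (x + s1 *\<^sub>R ?u))"
    by blast
  define \<psi> where "\<psi> t = pd i f ((x + s1 *\<^sub>R ?u) + t *\<^sub>R ?v)" for t
  have "DERIV \<psi> t :> pd j (pd i f) ((x + s1 *\<^sub>R ?u) + t *\<^sub>R ?v)" if "0 \<le> t" "t \<le> h" for t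
    unfolding \<psi>_def by (intro line_deriv dfi sq) (use that s1 in auto)
  from MVT2[OF h this] obtain t1 where t1: "0 < t1" "t1 < h"
    and e2: "\<psi> h - \<psi> 0 = (h - 0) * pd j (pd i f) ((x + s1 *\<^sub>R ?u) + t1 *\<^sub>R ?v)"
    by blast
  have "\<psi> h - \<psi> 0 = pd i f ((x + h *\<^sub>R ?v) + s1 *\<^sub>R ?u) - pd i f (x + s1 *\<^sub>R ?u)"
    unfolding \<psi>_def by (simp add: algebra_simps)
  moreover have "\<phi> h - \<phi> 0 = f (x + h *\<^sub>R ?u + h *\<^sub>R ?v) - f (x + h *\<^sub>R ?u) - f (x + h *\<^sub>R ?v) + f x"
    unfolding \<phi>_def by (simp add: algebra_simps)
  moreover have "(x + h *\<^sub>R ?v) + s1 *\<^sub>R ?u = x + s1 *\<^sub>R ?u + h *\<^sub>R ?v" by (simp add: algebra_simps)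
  ultimately have "f (x + h *\<^sub>R ?u + h *\<^sub>R ?v) - f (x + h *\<^sub>R ?u) - f (x + h *\<^sub>R ?v) + f x
       = h * h * pd j (pd i f) (x + s1 *\<^sub>R ?u + t1 *\<^sub>R ?v)" using e1 e2 by (simp, metis mult.assoc)
  then show ?thesis using s1 t1 by blast
qed

lemma clairaut:
  fixes f :: "pt \<Rightarrow> real"
  assumes U: "open U" "x \<in> U" and f: "f differentiable_on U"
    and fi: "pd i f differentiable_on U" and fj: "pd j f differentiable_on U"
    and ci: "continuous_on U (pd j (pd i f))" and cj: "continuous_on U (pd i (pd j f))"
  shows "pd j (pd i f) x = pd i (pd j f) x"
proof (rule ccontr)
  let ?A = "pd j (pd i f)" and ?B = "pd i (pd j f)"
  assume ne: "?A x \<noteq> ?B x"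
  define \<epsilon> where "\<epsilon> = \<bar>?A x - ?B x\<bar> / 2"
  have \<epsilon>: "\<epsilon> > 0" using ne by (simp add: \<epsilon>_def)
  have cA: "isCont ?A x" using ci U continuous_on_eq_continuous_at by blast
  have cB: "isCont ?B x" using cj U continuous_on_eq_continuous_at by blast
  obtain d1 where d1: "d1 > 0" "\<And>z. dist z x < d1 \<Longrightarrow> dist (?A z) (?A x) < \<epsilon>"
    using cA \<epsilon> unfolding continuous_at_eps_delta by (metis dist_commute)
  obtain d2 where d2: "d2 > 0" "\<And>z. dist z x < d2 \<Longrightarrow> dist (?B z) (?B x) < \<epsilon>"
    using cB \<epsilon> unfolding continuous_at_eps_delta by (metis dist_commute)
  obtain d3 where d3: "d3 > 0" "ball x d3 \<subseteq> U" using U open_contains_ball by blast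
  define d where "d = min d1 (min d2 d3)"
  have d: "d > 0" "d \<le> d1" "d \<le> d2" "d \<le> d3" using d1 d2 d3 by (auto simp: d_def)
  define h where "h = d / 3"
  have h: "h > 0" using d by (simp add: h_def)
  have nrm: "dist (x + s *\<^sub>R axis a 1 + t *\<^sub>R axis b 1) x < d"
    if "0 \<le> s" "s \<le> h" "0 \<le> t" "t \<le> h" for s t a b
  proof -
    have "dist (x + s *\<^sub>R axis a 1 + t *\<^sub>R axis b 1) x = norm (s *\<^sub>R (axis a 1::pt) + t *\<^sub>R axis b 1)"
      by (simp add: dist_norm)
    also have "\<dots> \<le> norm (s *\<^sub>R (axis a 1::pt)) + norm (t *\<^sub>R (axis b 1::pt))" by (rule norm_triangle_ineq)
    also have "\<dots> = s + t" using that by simp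
    also have "\<dots> < d" using that h by (simp add: h_def)
    finally show ?thesis .
  qed
  have inU: "x + s *\<^sub>R axis a 1 + t *\<^sub>R axis b 1 \<in> ball x d3"
    if "0 \<le> s" "s \<le> h" "0 \<le> t" "t \<le> h" for s t a b
    using nrm[OF that, of a b] d by (simp add: dist_commute)
  have dfU: "\<And>z. z \<in> ball x d3 \<Longrightarrow> f differentiable (at z)" using f d3 U diff_on_at by blast
  have dfiU: "\<And>z. z \<in> ball x d3 \<Longrightarrow> pd i f differentiable (at z)" using fi d3 U diff_on_at by blast
  have dfjU: "\<And>z. z \<in> ball x d3 \<Longrightarrow> pd j f differentiable (at z)" using fj d3 U diff_on_at by blast
  obtain s1 t1 where st1: "0 < s1" "s1 < h" "0 < t1" "t1 < h"
    and e1: "f (x + h *\<^sub>R axis i 1 + h *\<^sub>R axis j 1) - f (x + h *\<^sub>R axis i 1) - f (x + h *\<^sub>R axis j 1) + f x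
       = h * h * ?A (x + s1 *\<^sub>R axis i 1 + t1 *\<^sub>R axis j 1)"
    using mvt_square[where i=i and j=j, OF h inU dfU dfiU] by blast
  obtain s2 t2 where st2: "0 < s2" "s2 < h" "0 < t2" "t2 < h"
    and e2: "f (x + h *\<^sub>R axis j 1 + h *\<^sub>R axis i 1) - f (x + h *\<^sub>R axis j 1) - f (x + h *\<^sub>R axis i 1) + f x
       = h * h * ?B (x + s2 *\<^sub>R axis j 1 + t2 *\<^sub>R axis i 1)"
    using mvt_square[where i=j and j=i, OF h inU dfU dfjU] by blast
  have pt: "x + h *\<^sub>R axis j 1 + h *\<^sub>R axis i 1 = x + h *\<^sub>R axis i 1 + h *\<^sub>R axis j 1"
    by (simp add: algebra_simps)
  have "h * h * ?A (x + s1 *\<^sub>R axis i 1 + t1 *\<^sub>R axis j 1) = h * h * ?B (x + s2 *\<^sub>R axis j 1 + t2 *\<^sub>R axis i 1)"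
    using e1 e2 unfolding pt by linarith
  then have eq: "?A (x + s1 *\<^sub>R axis i 1 + t1 *\<^sub>R axis j 1) = ?B (x + s2 *\<^sub>R axis j 1 + t2 *\<^sub>R axis i 1)"
    using h by simp
  have a1: "dist (?A (x + s1 *\<^sub>R axis i 1 + t1 *\<^sub>R axis j 1)) (?A x) < \<epsilon>"
    using d1(2) nrm[of s1 t1 i j] st1 d by force
  have b1: "dist (?B (x + s2 *\<^sub>R axis j 1 + t2 *\<^sub>R axis i 1)) (?B x) < \<epsilon>"
    using d2(2) nrm[of s2 t2 j i] st2 d by force
  have "\<bar>?A x - ?B x\<bar> < 2 * \<epsilon>" using a1 b1 eq by (simp add: dist_real_def)
  then show False by (simp add: \<epsilon>_def)
qed

lemma clairaut_smooth:
  fixes f :: "pt \<Rightarrow> real"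
  assumes "open U" "x \<in> U" "smooth_on U f"
  shows "pd j (pd i f) x = pd i (pd j f) x"
proof (rule clairaut[OF assms(1,2)])
  show "f differentiable_on U" "pd i f differentiable_on U" "pd j f differentiable_on U"
    using assms(3) smooth_on_D by blast+
  show "continuous_on U (pd j (pd i f))" "continuous_on U (pd i (pd j f))"
    using assms(3) smooth_on_D differentiable_imp_continuous_on by blast+
qed


definition nx :: "3 \<Rightarrow> 3" where "nx i = (if i = 1 then 2 else if i = 2 then 3 else 1)"

lemma nx_simps[simp]: "nx 1 = 2" "nx 2 = 3" "nx 3 = 1"
  by (auto simp: nx_def)

definition adj3 :: "real^3^3 \<Rightarrow> real^3^3" where
  "adj3 A = (\<chi> i j. A$(nx j)$(nx i) * A$(nx (nx j))$(nx (nx i)) - A$(nx j)$(nx (nx i)) * A$(nx (nx j))$(nx i))"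

lemma adj3_right: "A ** adj3 A = det A *\<^sub>R mat 1"
  unfolding vec_eq_iff matrix_matrix_mult_def adj3_def
  by (simp add: forall_3 sum_3 det_3 mat_def) algebra

lemma adj3_left: "adj3 A ** A = det A *\<^sub>R mat 1"
  unfolding vec_eq_iff matrix_matrix_mult_def adj3_def
  by (simp add: forall_3 sum_3 det_3 mat_def) algebra

lemma matrix_inv_eq:
  fixes A M :: "'a::comm_ring_1^'n^'n"
  assumes "A ** M = mat 1" "M ** A = mat 1"
  shows "matrix_inv A = M"
proof -
  let ?P = "\<lambda>A'. A ** A' = mat 1 \<and> A' ** A = mat 1"
  have "?P (matrix_inv A)" unfolding matrix_inv_def by (rule someI[of ?P M]) (use assms in auto)
  then have "matrix_inv A = matrix_inv A ** (A ** M)" using assms by (simp add: matrix_mul_rid)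
  also have "\<dots> = (matrix_inv A ** A) ** M" by (simp add: matrix_mul_assoc)
  also have "\<dots> = M" using \<open>?P (matrix_inv A)\<close> by (simp add: matrix_mul_lid)
  finally show ?thesis .
qed

lemma matrix_inv_3:
  fixes A :: "real^3^3"
  assumes "det A \<noteq> 0"
  shows "matrix_inv A = (1 / det A) *\<^sub>R adj3 A"
  apply (rule matrix_inv_eq)
  using assms by (simp_all add: matrix_scalar_ac scalar_matrix_assoc[symmetric] adj3_right adj3_left)


lemma inv_contract:
  fixes K G :: "3 \<Rightarrow> 3 \<Rightarrow> real"
  assumes "\<And>d. (\<Sum>f\<in>UNIV. K f d * G f b) = (if d = b then 1 else 0)"
  shows "(\<Sum>f\<in>UNIV. (\<Sum>d\<in>UNIV. K f d * X d) * G f b) = X b"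
proof -
  have "(\<Sum>f\<in>UNIV. (\<Sum>d\<in>UNIV. K f d * X d) * G f b) = (\<Sum>f\<in>UNIV. \<Sum>d\<in>UNIV. X d * (K f d * G f b))"
    unfolding sum_distrib_right by (simp add: mult_ac)
  also have "\<dots> = (\<Sum>d\<in>UNIV. X d * (\<Sum>f\<in>UNIV. K f d * G f b))"
    by (subst sum.swap) (simp add: sum_distrib_left)
  also have "\<dots> = X b" by (simp add: assms if_distrib cong: if_cong)
  finally show ?thesis .
qed

lemma invertible_inv:
  fixes A :: "'a::comm_ring_1^'n^'n"
  assumes "invertible A"
  shows "A ** matrix_inv A = mat 1" "matrix_inv A ** A = mat 1"
proof -
  let ?P = "\<lambda>A'. A ** A' = mat 1 \<and> A' ** A = mat 1"
  obtain M where "?P M" using assms unfolding invertible_def by blast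
  then have "?P (matrix_inv A)" unfolding matrix_inv_def by (rule someI)
  then show "A ** matrix_inv A = mat 1" "matrix_inv A ** A = mat 1" by auto
qed

locale metric =
  fixes U :: "pt set" and g :: "pt \<Rightarrow> 3 \<Rightarrow> 3 \<Rightarrow> real"
  assumes met: "metric_on U g"
begin

lemma opn: "open U" using met by (simp add: metric_on_def)
lemma g_smooth: "smooth_on U (\<lambda>x. g x i j)" using met by (simp add: metric_on_def)
lemma g_sm: "sm U (\<lambda>x. g x i j)" using g_smooth by (rule sm_base)
lemma g_sym: "y \<in> U \<Longrightarrow> g y i j = g y j i" using met by (simp add: metric_on_def)
lemma det_nz: "y \<in> U \<Longrightarrow> det (\<chi> i j. g y i j) \<noteq> 0" using met by (simp add: metric_on_def)

lemma g_diff: "y \<in> U \<Longrightarrow> (\<lambda>x. g x i j) differentiable (at y)"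
  using sm_diffble[OF opn g_sm] .

lemma ginv_expl:
  assumes "y \<in> U"
  shows "ginv g y i j =
    (g y (nx j) (nx i) * g y (nx (nx j)) (nx (nx i)) - g y (nx j) (nx (nx i)) * g y (nx (nx j)) (nx i)) /
    (g y 1 1 * g y 2 2 * g y 3 3 + g y 1 2 * g y 2 3 * g y 3 1 + g y 1 3 * g y 2 1 * g y 3 2 -
     g y 1 1 * g y 2 3 * g y 3 2 - g y 1 2 * g y 2 1 * g y 3 3 - g y 1 3 * g y 2 2 * g y 3 1)"
  using matrix_inv_3[OF det_nz[OF assms]] unfolding ginv_def
  by (simp add: adj3_def det_3 divide_inverse mult.commute)

lemma ginv_sm: "sm U (\<lambda>y. ginv g y i j)"
proof (rule sm_cong[where h = "\<lambda>y. ginv g y i j"])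
  show "sm U (\<lambda>y. (g y (nx j) (nx i) * g y (nx (nx j)) (nx (nx i)) - g y (nx j) (nx (nx i)) * g y (nx (nx j)) (nx i)) /
    (g y 1 1 * g y 2 2 * g y 3 3 + g y 1 2 * g y 2 3 * g y 3 1 + g y 1 3 * g y 2 1 * g y 3 2 -
     g y 1 1 * g y 2 3 * g y 3 2 - g y 1 2 * g y 2 1 * g y 3 3 - g y 1 3 * g y 2 2 * g y 3 1))"
    apply (intro sm_divide sm_diff sm_add sm_mult g_sm)
    using det_nz by (simp add: det_3)
qed (simp add: ginv_expl)

lemma ginv_diff: "y \<in> U \<Longrightarrow> (\<lambda>x. ginv g x i j) differentiable (at y)"
  using sm_diffble[OF opn ginv_sm] .

lemma inv_rel:
  assumes "y \<in> U"
  shows "(\<Sum>b\<in>UNIV. g y a b * ginv g y b c) = (if a = c then 1 else 0)"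
    "(\<Sum>b\<in>UNIV. ginv g y a b * g y b c) = (if a = c then 1 else 0)"
proof -
  let ?A = "(\<chi> i j. g y i j) :: real^3^3"
  have inv: "invertible ?A" using det_nz[OF assms] by (simp add: invertible_det_nz)
  have "(?A ** matrix_inv ?A) $ a $ c = mat 1 $ a $ c" using invertible_inv(1)[OF inv] by simp
  then show "(\<Sum>b\<in>UNIV. g y a b * ginv g y b c) = (if a = c then 1 else 0)"
    by (simp add: matrix_matrix_mult_def ginv_def mat_def)
  have "(matrix_inv ?A ** ?A) $ a $ c = mat 1 $ a $ c" using invertible_inv(2)[OF inv] by simp
  then show "(\<Sum>b\<in>UNIV. ginv g y a b * g y b c) = (if a = c then 1 else 0)"
    by (simp add: matrix_matrix_mult_def ginv_def mat_def)
qed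

lemma ginv_sym:
  assumes "y \<in> U"
  shows "ginv g y i j = ginv g y j i"
proof -
  let ?A = "(\<chi> i j. g y i j) :: real^3^3"
  let ?B = "matrix_inv ?A"
  have inv: "invertible ?A" using det_nz[OF assms] by (simp add: invertible_det_nz)
  have sA: "transpose ?A = ?A" using g_sym[OF assms] by (simp add: transpose_def vec_eq_iff)
  have "transpose ?B ** ?A = mat 1"
    using arg_cong[OF invertible_inv(1)[OF inv], of transpose] sA
    by (simp add: matrix_transpose_mul transpose_mat)
  then have "transpose ?B = transpose ?B ** (?A ** ?B)" using invertible_inv(1)[OF inv] by (simp add: matrix_mul_rid)
  also have "\<dots> = (transpose ?B ** ?A) ** ?B" by (simp add: matrix_mul_assoc)
  also have "\<dots> = ?B" using \<open>transpose ?B ** ?A = mat 1\<close> by (simp add: matrix_mul_lid)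
  finally have "transpose ?B $ i $ j = ?B $ i $ j" by simp
  then show ?thesis by (simp add: ginv_def transpose_def)
qed

lemma chr_sm: "sm U (\<lambda>y. chr g y c a b)"
  unfolding chr_def
  by (intro sm_divide sm_sum sm_mult sm_diff sm_add ginv_sm sm_pd[OF opn] g_sm sm_const) auto

lemma dg_sym:
  assumes "x \<in> U"
  shows "pd e (\<lambda>y. g y a b) x = pd e (\<lambda>y. g y b a) x"
  by (rule pd_local[OF opn assms]) (auto simp: g_sym g_diff assms)

lemma chr_sym: "y \<in> U \<Longrightarrow> chr g y c a b = chr g y c b a"
  unfolding chr_def using dg_sym[of y] by (simp add: algebra_simps)

lemma chr_alt: "chr g x c a b = (\<Sum>d\<in>UNIV. ginv g x c d *
      (pd a (\<lambda>y. g y b d) x + pd b (\<lambda>y. g y a d) x - pd d (\<lambda>y. g y a b) x)) / 2"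
  by (rule chr_def)

lemma metric_compat:
  assumes x: "x \<in> U"
  shows "pd e (\<lambda>y. g y a b) x = (\<Sum>f\<in>UNIV. chr g x f e a * g x f b + chr g x f e b * g x a f)"
proof -
  let ?D = "\<lambda>i j k. pd i (\<lambda>y. g y j k) x"
  have rel: "\<And>d b. (\<Sum>f\<in>UNIV. ginv g x f d * g x f b) = (if d = b then 1 else 0)"
    using inv_rel(2)[OF x] ginv_sym[OF x] by simp
  have "(\<Sum>f\<in>UNIV. chr g x f e a * g x f b) = (\<Sum>f\<in>UNIV. (\<Sum>d\<in>UNIV. ginv g x f d * (?D e a d + ?D a e d - ?D d e a)) * g x f b) / 2"
    unfolding chr_alt by (subst sum_divide_distrib, rule sum.cong[OF refl], simp)
  also have "\<dots> = (?D e a b + ?D a e b - ?D b e a) / 2" by (subst inv_contract[OF rel]) simp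
  finally have 1: "(\<Sum>f\<in>UNIV. chr g x f e a * g x f b) = (?D e a b + ?D a e b - ?D b e a) / 2" .
  have "(\<Sum>f\<in>UNIV. chr g x f e b * g x a f) = (\<Sum>f\<in>UNIV. chr g x f e b * g x f a)"
    using g_sym[OF x] by simp
  also have "\<dots> = (\<Sum>f\<in>UNIV. (\<Sum>d\<in>UNIV. ginv g x f d * (?D e b d + ?D b e d - ?D d e b)) * g x f a) / 2"
    unfolding chr_alt by (subst sum_divide_distrib, rule sum.cong[OF refl], simp)
  also have "\<dots> = (?D e b a + ?D b e a - ?D a e b) / 2" by (subst inv_contract[OF rel]) simp
  finally have 2: "(\<Sum>f\<in>UNIV. chr g x f e b * g x a f) = (?D e b a + ?D b e a - ?D a e b) / 2" .
  have "?D e b a = ?D e a b" using dg_sym[OF x] by simp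
  then show ?thesis using 1 2 by (simp add: sum.distrib)
qed

end


lemma delta_sum[simp]:
  fixes X :: "3 \<Rightarrow> real"
  shows "(\<Sum>f\<in>UNIV. (if a = f then 1 else 0) * X f) = X a"
    "(\<Sum>f\<in>UNIV. (if f = a then 1 else 0) * X f) = X a"
    "(\<Sum>f\<in>UNIV. X f * (if a = f then 1 else 0)) = X a"
    "(\<Sum>f\<in>UNIV. X f * (if f = a then 1 else 0)) = X a"
  using exhaust_3[of a] unfolding sum_3 by auto

lemma contr_r:
  fixes G H :: "3 \<Rightarrow> 3 \<Rightarrow> real"
  assumes "\<And>c. (\<Sum>d\<in>UNIV. G c d * H d b) = (if c = b then 1 else 0)"
  shows "(\<Sum>d\<in>UNIV. (\<Sum>c\<in>UNIV. X c * G c d) * H d b) = X b"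
proof -
  have "(\<Sum>d\<in>UNIV. (\<Sum>c\<in>UNIV. X c * G c d) * H d b) = (\<Sum>c\<in>UNIV. X c * (\<Sum>d\<in>UNIV. G c d * H d b))"
    unfolding sum_3 by (simp add: algebra_simps)
  also have "\<dots> = X b" by (simp add: assms)
  finally show ?thesis .
qed

context metric begin

lemma inv_rel_sym:
  assumes "y \<in> U"
  shows "(\<Sum>b\<in>UNIV. g y a b * ginv g y c b) = (if a = c then 1 else 0)"
    "(\<Sum>b\<in>UNIV. ginv g y b a * g y b c) = (if a = c then 1 else 0)"
    "(\<Sum>b\<in>UNIV. g y b a * ginv g y b c) = (if a = c then 1 else 0)"
    "(\<Sum>b\<in>UNIV. ginv g y a b * g y c b) = (if a = c then 1 else 0)"
proof -
  have hs: "\<And>c b. ginv g y c b = ginv g y b c" and gs: "\<And>c b. g y c b = g y b c"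
    using ginv_sym[OF assms] g_sym[OF assms] by blast+
  show "(\<Sum>b\<in>UNIV. g y a b * ginv g y c b) = (if a = c then 1 else 0)"
    using inv_rel(1)[OF assms, of a c] hs[of c] by simp
  show "(\<Sum>b\<in>UNIV. ginv g y b a * g y b c) = (if a = c then 1 else 0)"
    using inv_rel(2)[OF assms, of a c] hs[of _ a] gs[of _ c] by simp
  show "(\<Sum>b\<in>UNIV. g y b a * ginv g y b c) = (if a = c then 1 else 0)"
    using inv_rel(1)[OF assms, of a c] hs[of _ c] gs[of _ a] by simp
  show "(\<Sum>b\<in>UNIV. ginv g y a b * g y c b) = (if a = c then 1 else 0)"
    using inv_rel(2)[OF assms, of a c] gs[of c] by simp
qed

lemma dginv:
  assumes x: "x \<in> U"
  shows "pd e (\<lambda>y. ginv g y a b) x = - (\<Sum>f\<in>UNIV. chr g x a e f * ginv g x f b) - (\<Sum>f\<in>UNIV. chr g x b e f * ginv g x a f)"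
proof -
  let ?H = "\<lambda>i j. ginv g x i j" and ?dH = "\<lambda>i j. pd e (\<lambda>y. ginv g y i j) x"
    and ?D = "\<lambda>i j. pd e (\<lambda>y. g y i j) x" and ?G = "\<lambda>i j k. chr g x i j k"
  have Z: "(\<Sum>c\<in>UNIV. ?dH a c * g x c d) = - (\<Sum>c\<in>UNIV. ?H a c * ?D c d)" for d
  proof -
    have "pd e (\<lambda>y. if a = d then 1 else 0 :: real) x = pd e (\<lambda>y. \<Sum>c\<in>UNIV. ginv g y a c * g y c d) x"
      by (rule pd_local[OF opn x]) (auto simp: inv_rel)
    then have "0 = (\<Sum>c\<in>UNIV. ?dH a c * g x c d + ?H a c * ?D c d)"
      by (simp add: pd_const pd_sum pd_mult ginv_diff g_diff x)
    then show ?thesis by (simp add: sum.distrib eq_neg_iff_add_eq_0)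
  qed
  have "?dH a b = (\<Sum>d\<in>UNIV. (\<Sum>c\<in>UNIV. ?dH a c * g x c d) * ?H d b)"
    by (rule contr_r[symmetric]) (use inv_rel[OF x] in simp)
  also have "\<dots> = - (\<Sum>d\<in>UNIV. (\<Sum>c\<in>UNIV. ?H a c * ?D c d) * ?H d b)"
    by (simp add: Z sum_negf)
  also have "\<dots> = - (\<Sum>d\<in>UNIV. (\<Sum>f\<in>UNIV. (\<Sum>c\<in>UNIV. ?H a c * ?G f e c) * g x f d) * ?H d b)
                 - (\<Sum>d\<in>UNIV. (\<Sum>f\<in>UNIV. (\<Sum>c\<in>UNIV. ?H a c * g x c f) * ?G f e d) * ?H d b)"
    unfolding metric_compat[OF x] unfolding sum_3 by algebra
  also have "(\<Sum>d\<in>UNIV. (\<Sum>f\<in>UNIV. (\<Sum>c\<in>UNIV. ?H a c * ?G f e c) * g x f d) * ?H d b)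
      = (\<Sum>c\<in>UNIV. ?H a c * ?G b e c)"
    by (rule contr_r) (use inv_rel[OF x] in simp)
  also have "(\<Sum>d\<in>UNIV. (\<Sum>f\<in>UNIV. (\<Sum>c\<in>UNIV. ?H a c * g x c f) * ?G f e d) * ?H d b)
      = (\<Sum>d\<in>UNIV. ?G a e d * ?H d b)"
    by (simp add: inv_rel(2)[OF x] sum_distrib_right[symmetric])
  finally show ?thesis using ginv_sym[OF x] chr_sym[OF x] by (simp add: mult.commute)
qed

end


type_synonym a3 = "3 \<Rightarrow> 3 \<Rightarrow> 3 \<Rightarrow> real"
type_synonym a4 = "3 \<Rightarrow> 3 \<Rightarrow> 3 \<Rightarrow> 3 \<Rightarrow> real"
type_synonym a5 = "3 \<Rightarrow> 3 \<Rightarrow> 3 \<Rightarrow> 3 \<Rightarrow> 3 \<Rightarrow> real"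

definition Rm :: "a3 \<Rightarrow> a4 \<Rightarrow> a4" where
  "Rm G P a b d c = P a c b d - P b c a d + (\<Sum>e\<in>UNIV. G c a e * G e b d - G c b e * G e a d)"
definition DRm :: "a3 \<Rightarrow> a4 \<Rightarrow> a5 \<Rightarrow> a5" where
  "DRm G P Q e a b d c = Q e a c b d - Q e b c a d + (\<Sum>h\<in>UNIV. P e c a h * G h b d + G c a h * P e h b d
                 - P e c b h * G h a d - G c b h * P e h a d)"
definition Nm :: "a3 \<Rightarrow> a4 \<Rightarrow> a5 \<Rightarrow> a5" where
  "Nm G P Q e a b d c = DRm G P Q e a b d c + (\<Sum>f\<in>UNIV. G c e f * Rm G P a b d f - G f e a * Rm G P f b d c
                 - G f e b * Rm G P a f d c - G f e d * Rm G P a b f c)"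

definition "Ricg G P a d = (\<Sum>c\<in>UNIV. Rm G P a c d c)"
definition "DRicg G P Q e a d = (\<Sum>c\<in>UNIV. DRm G P Q e a c d c)"
definition "dHg (G::a3) H m a b = - (\<Sum>f\<in>UNIV. G a m f * H f b) - (\<Sum>f\<in>UNIV. G b m f * H a f)"
definition "Tg G P (H::3\<Rightarrow>3\<Rightarrow>real) a c = (\<Sum>e\<in>UNIV. \<Sum>d\<in>UNIV. H e d * Rm G P e a d c)"
definition "DTg G P Q H m a c = (\<Sum>e\<in>UNIV. \<Sum>d\<in>UNIV. dHg G H m e d * Rm G P e a d c + H e d * DRm G P Q m e a d c)"
definition "Rlg G P (g0::3\<Rightarrow>3\<Rightarrow>real) a b d f = (\<Sum>c\<in>UNIV. g0 f c * Rm G P a b d c)"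
definition "Dmg (G::a3) g0 f h b = (\<Sum>k\<in>UNIV. G k f h * g0 k b + G k f b * g0 h k)"
definition "Emg G (P::a4) g0 a b d f = (\<Sum>h\<in>UNIV. P a h b d * g0 h f + G h b d * Dmg G g0 a h f + P a h b f * g0 d h + G h b f * Dmg G g0 a d h)"

locale symG =
  fixes G :: a3 and P :: a4 and Q :: a5
  assumes Gs: "\<And>c a b. G c a b = G c b a"
    and Ps: "\<And>e c a b. P e c a b = P e c b a"
    and Qs: "\<And>f e c a b. Q f e c a b = Q e f c a b"
    and Qs2: "\<And>f e c a b. Q f e c a b = Q f e c b a"
begin

lemma bianchi2: "Nm G P Q e a b d c + Nm G P Q a b e d c + Nm G P Q b e a d c = 0"
  unfolding Nm_def DRm_def Rm_def sum_3
  apply (simp only: Gs[of c] Gs[of 1] Gs[of 2] Gs[of 3] Ps Qs)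
  by algebra

lemma bianchi1: "Rm G P a b d c + Rm G P b d a c + Rm G P d a b c = 0"
  unfolding Rm_def sum_3
  by (simp only: Gs[of c] Gs[of 1] Gs[of 2] Gs[of 3] Ps)

abbreviation "Ricm \<equiv> Ricg G P"
abbreviation "DRicm \<equiv> DRicg G P Q"

lemma term1: "(\<Sum>c\<in>UNIV. Nm G P Q e a c d c) = DRicm e a d - (\<Sum>f\<in>UNIV. G f e a * Ricm f d) - (\<Sum>f\<in>UNIV. G f e d * Ricm a f)"
  unfolding Nm_def DRicg_def Ricg_def DRm_def Rm_def sum_3
  by algebra

lemma term2: "(\<Sum>c\<in>UNIV. Nm G P Q a c e d c) = - (DRicm a e d - (\<Sum>f\<in>UNIV. G f a e * Ricm f d) - (\<Sum>f\<in>UNIV. G f a d * Ricm e f))"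
  unfolding Nm_def DRicg_def Ricg_def DRm_def Rm_def sum_3
  by algebra

end

lemma pair_sym:
  fixes T :: a4
  assumes a12: "\<And>a b c d. T a b c d = - T b a c d"
    and a34: "\<And>a b c d. T a b c d = - T a b d c"
    and cyc: "\<And>a b c d. T a b c d + T b c a d + T c a b d = 0"
  shows "T a b c d = T c d a b"
proof -
  have "T a b c d + T b c a d + T c a b d = 0" "T b c d a + T c d b a + T d b c a = 0"
    "T c d a b + T d a c b + T a c d b = 0" "T d a b c + T a b d c + T b d a c = 0"
    using cyc by blast+
  moreover have "T b c d a = - T b c a d" "T c d b a = - T c d a b" "T d b c a = - T d b a c"
    "T d a c b = - T d a b c" "T a c d b = - T a c b d" "T a b d c = - T a b c d"
    using a34 by blast+
  moreover have "T d b a c = - T b d a c" "T c a b d = - T a c b d" "T d a b c = - T a d b c"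
    "T b c a d = - T c b a d"
    using a12 by blast+
  moreover have "T b c a d = T b c a d" ..
  ultimately show ?thesis using a12[of c b a d] a12[of a d b c] by linarith
qed

context symG begin

abbreviation "dHm \<equiv> dHg G"
abbreviation "Tm \<equiv> Tg G P"
abbreviation "DTm \<equiv> DTg G P Q"

lemma term3: "(\<Sum>e\<in>UNIV. \<Sum>d\<in>UNIV. H e d * Nm G P Q m e a d c) =
   DTm H m a c + (\<Sum>f\<in>UNIV. G c m f * Tm H a f) - (\<Sum>f\<in>UNIV. G f m a * Tm H f c)"
  unfolding Nm_def DTg_def Tg_def dHg_def sum_3
  by algebra

abbreviation "Rl \<equiv> Rlg G P"
abbreviation "Dm \<equiv> Dmg G"
abbreviation "Em \<equiv> Emg G P"

lemma contracted:
  assumes Hs: "\<And>a b. H a b = H b a"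
    and T: "\<And>a c. Tm H a c = (\<Sum>f\<in>UNIV. H c f * Ricm f a)"
    and DT: "\<And>m a c. DTm H m a c = (\<Sum>f\<in>UNIV. dHm H m c f * Ricm f a + H c f * DRicm m f a)"
    and Rs: "\<And>a b. Ricm a b = Ricm b a"
    and DRs: "\<And>m a b. DRicm m a b = DRicm m b a"
  shows "2 * (\<Sum>c\<in>UNIV. \<Sum>e\<in>UNIV. H c e * (DRicm c e a - (\<Sum>f\<in>UNIV. G f c e * Ricm f a) - (\<Sum>f\<in>UNIV. G f c a * Ricm e f)))
    = (\<Sum>b\<in>UNIV. \<Sum>d\<in>UNIV. dHm H a b d * Ricm b d + H b d * DRicm a b d)"
proof -
  have "0 = (\<Sum>e\<in>UNIV. \<Sum>d\<in>UNIV. H e d * (\<Sum>c\<in>UNIV. Nm G P Q e a c d c + Nm G P Q a c e d c + Nm G P Q c e a d c))"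
    by (simp add: bianchi2)
  also have "\<dots> = (\<Sum>e\<in>UNIV. \<Sum>d\<in>UNIV. H e d * (\<Sum>c\<in>UNIV. Nm G P Q e a c d c))
     + (\<Sum>e\<in>UNIV. \<Sum>d\<in>UNIV. H e d * (\<Sum>c\<in>UNIV. Nm G P Q a c e d c))
     + (\<Sum>c\<in>UNIV. (\<Sum>e\<in>UNIV. \<Sum>d\<in>UNIV. H e d * Nm G P Q c e a d c))"
    unfolding sum_3 by algebra
  also have "\<dots> = (\<Sum>e\<in>UNIV. \<Sum>d\<in>UNIV. H e d * (DRicm e a d - (\<Sum>f\<in>UNIV. G f e a * Ricm f d) - (\<Sum>f\<in>UNIV. G f e d * Ricm a f)))
     + (\<Sum>e\<in>UNIV. \<Sum>d\<in>UNIV. H e d * (- (DRicm a e d - (\<Sum>f\<in>UNIV. G f a e * Ricm f d) - (\<Sum>f\<in>UNIV. G f a d * Ricm e f))))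
     + (\<Sum>c\<in>UNIV. DTm H c a c + (\<Sum>f\<in>UNIV. G c c f * Tm H a f) - (\<Sum>f\<in>UNIV. G f c a * Tm H f c))"
    by (simp only: term1 term2 term3)
  also have "\<dots> = 2 * (\<Sum>c\<in>UNIV. \<Sum>e\<in>UNIV. H c e * (DRicm c e a - (\<Sum>f\<in>UNIV. G f c e * Ricm f a) - (\<Sum>f\<in>UNIV. G f c a * Ricm e f)))
    - (\<Sum>b\<in>UNIV. \<Sum>d\<in>UNIV. dHm H a b d * Ricm b d + H b d * DRicm a b d)"
    unfolding T DT dHg_def sum_3
    apply (simp only: Hs Rs DRs Gs)
    by algebra
  finally show ?thesis by linarith
qed


lemma antisym_id:
  assumes gs: "\<And>a b. g0 a b = g0 b a"
  shows "Rl g0 a b d f + Rl g0 a b f d = Em g0 a b d f - Em g0 b a d f"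
  unfolding Rlg_def Emg_def Dmg_def Rm_def sum_3
  apply (simp only: Gs[of 1] Gs[of 2] Gs[of 3] Gs[of a] Gs[of b] Gs[of d] Gs[of f] Ps gs)
  by algebra

end


lemma pd_divc:
  assumes "f differentiable (at x)"
  shows "pd i (\<lambda>y. f y / (c::real)) x = pd i f x / c"
  using pd_mult[OF assms differentiable_const[of "1/c"], of i] by (simp add: pd_const)

context metric begin

lemma P_sm: "sm U (\<lambda>y. pd e (\<lambda>z. chr g z c a b) y)"
  using sm_pd[OF opn chr_sm] by (simp add: eta_contract_eq)

lemma riem_sm: "sm U (\<lambda>y. riem g y a b d c)"
  unfolding riem_def
  by (intro sm_add sm_diff sm_sum sm_mult chr_sm P_sm) auto

lemma ric_sm: "sm U (\<lambda>y. ric g y a b)"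
  unfolding ric_def by (intro sm_sum riem_sm) auto

lemma scal_sm: "sm U (\<lambda>y. scal g y)"
  unfolding scal_def by (intro sm_sum sm_mult ric_sm ginv_sm) auto

lemma Phi_sm: "sm U (\<lambda>y. Phi g y a b)"
  unfolding Phi_def by (intro sm_diff sm_divide sm_mult ric_sm scal_sm g_sm sm_const) auto

lemma chr_diff: "y \<in> U \<Longrightarrow> (\<lambda>z. chr g z c a b) differentiable (at y)"
  using sm_diffble[OF opn chr_sm] .
lemma P_diff: "y \<in> U \<Longrightarrow> (\<lambda>z. pd e (\<lambda>w. chr g w c a b) z) differentiable (at y)"
  using sm_diffble[OF opn P_sm] .
lemma riem_diff: "y \<in> U \<Longrightarrow> (\<lambda>z. riem g z a b d c) differentiable (at y)"
  using sm_diffble[OF opn riem_sm] .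
lemma ric_diff: "y \<in> U \<Longrightarrow> (\<lambda>z. ric g z a b) differentiable (at y)"
  using sm_diffble[OF opn ric_sm] .
lemma scal_diff: "y \<in> U \<Longrightarrow> (\<lambda>z. scal g z) differentiable (at y)"
  using sm_diffble[OF opn scal_sm] .
lemma Phi_diff: "y \<in> U \<Longrightarrow> (\<lambda>z. Phi g z a b) differentiable (at y)"
  using sm_diffble[OF opn Phi_sm] .
lemma dg_diff: "y \<in> U \<Longrightarrow> (\<lambda>z. pd e (\<lambda>w. g w a b) z) differentiable (at y)"
  using sm_diffble[OF opn sm_pd[OF opn g_sm]] by (simp add: eta_contract_eq)

lemmas diffs = chr_diff P_diff riem_diff ric_diff scal_diff Phi_diff dg_diff g_diff ginv_diff

abbreviation "PP y \<equiv> (\<lambda>e c a b. pd e (\<lambda>z. chr g z c a b) y)"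
abbreviation "QQ y \<equiv> (\<lambda>f e c a b. pd f (\<lambda>z. pd e (\<lambda>w. chr g w c a b) z) y)"

lemma P_sym: "y \<in> U \<Longrightarrow> PP y e c a b = PP y e c b a"
  by (rule pd_local[OF opn]) (auto simp: chr_sym diffs)

lemma Q_sym2: "y \<in> U \<Longrightarrow> QQ y f e c a b = QQ y f e c b a"
  by (rule pd_local[OF opn]) (auto simp: P_sym diffs)

lemma Q_sym: "y \<in> U \<Longrightarrow> QQ y f e c a b = QQ y e f c a b"
  using clairaut_smooth[OF opn _ sm_smooth[OF opn chr_sm]] by blast

lemma symG_at: "y \<in> U \<Longrightarrow> symG (chr g y) (PP y) (QQ y)"
  by unfold_locales (auto intro: chr_sym P_sym Q_sym Q_sym2)

lemma riem_Rm: "riem g y a b d c = Rm (chr g y) (PP y) a b d c"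
  unfolding riem_def Rm_def ..

lemma ric_Ricm: "ric g y a b = Ricg (chr g y) (PP y) a b"
  unfolding ric_def riem_Rm by (simp add: Ricg_def)

lemma D_riem:
  assumes "x \<in> U"
  shows "pd m (\<lambda>y. riem g y a b d c) x = DRm (chr g x) (PP x) (QQ x) m a b d c"
  unfolding riem_def DRm_def using assms
  by (simp add: pd_add pd_diff pd_sum pd_mult diffs algebra_simps sum.distrib sum_subtractf)

lemma E_expr:
  assumes y: "y \<in> U"
  shows "pd a (\<lambda>z. pd b (\<lambda>w. g w d f) z) y = Emg (chr g y) (PP y) (g y) a b d f"
proof -
  have "pd a (\<lambda>z. \<Sum>h\<in>UNIV. chr g z h b d * g z h f + chr g z h b f * g z d h) y = pd a (\<lambda>z. pd b (\<lambda>w. g w d f) z) y"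
    by (rule pd_local[OF opn y]) (auto simp: metric_compat diffs y)
  moreover have "pd a (\<lambda>z. \<Sum>h\<in>UNIV. chr g z h b d * g z h f + chr g z h b f * g z d h) y = Emg (chr g y) (PP y) (g y) a b d f"
    using y by (simp add: pd_add pd_sum pd_mult diffs Emg_def Dmg_def metric_compat algebra_simps sum.distrib)
  ultimately show ?thesis by simp
qed

lemma Rl_anti34:
  assumes y: "y \<in> U"
  shows "Rlg (chr g y) (PP y) (g y) a b d f = - Rlg (chr g y) (PP y) (g y) a b f d"
proof -
  interpret symG "chr g y" "PP y" "QQ y" by (rule symG_at[OF y])
  have "Rlg (chr g y) (PP y) (g y) a b d f + Rlg (chr g y) (PP y) (g y) a b f d
      = pd a (\<lambda>z. pd b (\<lambda>w. g w d f) z) y - pd b (\<lambda>z. pd a (\<lambda>w. g w d f) z) y"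
    using antisym_id[of "g y" a b d f] g_sym[OF y] by (simp add: E_expr y)
  also have "\<dots> = 0" using clairaut_smooth[OF opn y g_smooth] by simp
  finally show ?thesis by simp
qed

lemma Rl_anti12: "Rlg G P g0 a b d f = - Rlg G P g0 b a d f"
  unfolding Rlg_def Rm_def by (simp add: sum_negf[symmetric] algebra_simps sum_subtractf)

lemma Rl_cyc:
  assumes y: "y \<in> U"
  shows "Rlg (chr g y) (PP y) (g y) a b d f + Rlg (chr g y) (PP y) (g y) b d a f + Rlg (chr g y) (PP y) (g y) d a b f = 0"
proof -
  interpret symG "chr g y" "PP y" "QQ y" by (rule symG_at[OF y])
  have "Rlg (chr g y) (PP y) (g y) a b d f + Rlg (chr g y) (PP y) (g y) b d a f + Rlg (chr g y) (PP y) (g y) d a b f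
     = (\<Sum>c\<in>UNIV. g y f c * (Rm (chr g y) (PP y) a b d c + Rm (chr g y) (PP y) b d a c + Rm (chr g y) (PP y) d a b c))"
    unfolding Rlg_def by (simp add: sum.distrib algebra_simps)
  also have "\<dots> = 0" by (simp add: bianchi1)
  finally show ?thesis .
qed

lemma Rl_pair:
  assumes y: "y \<in> U"
  shows "Rlg (chr g y) (PP y) (g y) a b d f = Rlg (chr g y) (PP y) (g y) d f a b"
  by (rule pair_sym[of "Rlg (chr g y) (PP y) (g y)"]) (auto intro: Rl_anti12 Rl_anti34[OF y] Rl_cyc[OF y])

lemma Rl_swap:
  assumes y: "y \<in> U"
  shows "Rlg (chr g y) (PP y) (g y) e a d f = Rlg (chr g y) (PP y) (g y) f d a e"
  using Rl_pair[OF y, of e a d f] Rl_anti12[of _ _ _ d f e a] Rl_anti34[OF y, of f d e a] by simp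

lemma R_Rl:
  assumes y: "y \<in> U"
  shows "Rm (chr g y) (PP y) a b d c = (\<Sum>f\<in>UNIV. ginv g y c f * Rlg (chr g y) (PP y) (g y) a b d f)"
proof -
  have "(\<Sum>f\<in>UNIV. ginv g y c f * Rlg (chr g y) (PP y) (g y) a b d f)
     = (\<Sum>e\<in>UNIV. (\<Sum>f\<in>UNIV. ginv g y c f * g y f e) * Rm (chr g y) (PP y) a b d e)"
    unfolding Rlg_def sum_3 by algebra
  also have "\<dots> = Rm (chr g y) (PP y) a b d c" by (simp add: inv_rel[OF y])
  finally show ?thesis by simp
qed

lemma ric_sym:
  assumes y: "y \<in> U"
  shows "ric g y a b = ric g y b a"
proof -
  let ?Rl = "Rlg (chr g y) (PP y) (g y)"
  have "ric g y a b = (\<Sum>c\<in>UNIV. \<Sum>f\<in>UNIV. ginv g y c f * ?Rl a c b f)"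
    unfolding ric_def riem_Rm R_Rl[OF y] ..
  also have "\<dots> = (\<Sum>c\<in>UNIV. \<Sum>f\<in>UNIV. ginv g y f c * ?Rl b c a f)"
    by (subst sum.swap) (simp add: Rl_pair[OF y, of a _ b])
  also have "\<dots> = ric g y b a"
    unfolding ric_def riem_Rm R_Rl[OF y] using ginv_sym[OF y] by simp
  finally show ?thesis .
qed

lemma T_id:
  assumes y: "y \<in> U"
  shows "Tg (chr g y) (PP y) (ginv g y) a c = (\<Sum>f\<in>UNIV. ginv g y c f * ric g y f a)"
proof -
  let ?Rl = "Rlg (chr g y) (PP y) (g y)"
  have s: "\<And>e a d f. ?Rl e a d f = ?Rl f d a e" by (rule Rl_swap[OF y])
  have hs: "\<And>a b. ginv g y a b = ginv g y b a" by (rule ginv_sym[OF y])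
  show ?thesis
    unfolding Tg_def ric_def riem_Rm R_Rl[OF y] sum_3
    apply (simp only: s hs)
    by algebra
qed

lemma dginv':
  assumes x: "x \<in> U"
  shows "pd m (\<lambda>y. ginv g y a b) x = dHg (chr g x) (ginv g x) m a b"
  unfolding dHg_def using dginv[OF x] .

lemma D_ric:
  assumes x: "x \<in> U"
  shows "pd m (\<lambda>y. ric g y a b) x = DRicg (chr g x) (PP x) (QQ x) m a b"
  unfolding ric_def DRicg_def using x by (simp add: pd_sum diffs D_riem)

lemma DT_id:
  assumes x: "x \<in> U"
  shows "DTg (chr g x) (PP x) (QQ x) (ginv g x) m a c =
    (\<Sum>f\<in>UNIV. dHg (chr g x) (ginv g x) m c f * ric g x f a + ginv g x c f * DRicg (chr g x) (PP x) (QQ x) m f a)"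
proof -
  have "pd m (\<lambda>y. \<Sum>e\<in>UNIV. \<Sum>d\<in>UNIV. ginv g y e d * riem g y e a d c) x
      = pd m (\<lambda>y. \<Sum>f\<in>UNIV. ginv g y c f * ric g y f a) x"
    by (rule pd_local[OF opn x]) (use x in \<open>auto simp: diffs T_id[unfolded Tg_def riem_Rm[symmetric]]\<close>)
  moreover have "pd m (\<lambda>y. \<Sum>e\<in>UNIV. \<Sum>d\<in>UNIV. ginv g y e d * riem g y e a d c) x
      = DTg (chr g x) (PP x) (QQ x) (ginv g x) m a c"
    unfolding DTg_def using x by (simp add: pd_sum pd_mult diffs D_riem dginv') (simp add: riem_Rm)
  moreover have "pd m (\<lambda>y. \<Sum>f\<in>UNIV. ginv g y c f * ric g y f a) x
      = (\<Sum>f\<in>UNIV. dHg (chr g x) (ginv g x) m c f * ric g x f a + ginv g x c f * DRicg (chr g x) (PP x) (QQ x) m f a)"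
    using x by (simp add: pd_sum pd_mult diffs D_ric dginv')
  ultimately show ?thesis by simp
qed

lemma DRic_sym:
  assumes x: "x \<in> U"
  shows "DRicg (chr g x) (PP x) (QQ x) m a b = DRicg (chr g x) (PP x) (QQ x) m b a"
proof -
  have "pd m (\<lambda>y. ric g y a b) x = pd m (\<lambda>y. ric g y b a) x"
    by (rule pd_local[OF opn x]) (auto simp: ric_sym diffs x)
  then show ?thesis by (simp add: D_ric x)
qed

lemma D_scal:
  assumes x: "x \<in> U"
  shows "pd m (scal g) x = (\<Sum>b\<in>UNIV. \<Sum>d\<in>UNIV. dHg (chr g x) (ginv g x) m b d * ric g x b d
      + ginv g x b d * DRicg (chr g x) (PP x) (QQ x) m b d)"
proof -
  have "scal g = (\<lambda>y. \<Sum>b\<in>UNIV. \<Sum>d\<in>UNIV. ginv g y b d * ric g y b d)"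
    by (rule ext) (simp add: scal_def)
  then show ?thesis using x by (simp add: pd_sum pd_mult diffs D_ric dginv')
qed

lemma contracted_at:
  assumes x: "x \<in> U"
  shows "2 * (\<Sum>c\<in>UNIV. \<Sum>e\<in>UNIV. ginv g x c e * (pd c (\<lambda>y. ric g y e a) x
      - (\<Sum>f\<in>UNIV. chr g x f c e * ric g x f a) - (\<Sum>f\<in>UNIV. chr g x f c a * ric g x e f)))
    = pd a (scal g) x"
proof -
  interpret symG "chr g x" "PP x" "QQ x" by (rule symG_at[OF x])
  have "2 * (\<Sum>c\<in>UNIV. \<Sum>e\<in>UNIV. ginv g x c e * (DRicm c e a - (\<Sum>f\<in>UNIV. chr g x f c e * Ricm f a)
     - (\<Sum>f\<in>UNIV. chr g x f c a * Ricm e f)))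
    = (\<Sum>b\<in>UNIV. \<Sum>d\<in>UNIV. dHm (ginv g x) a b d * Ricm b d + ginv g x b d * DRicm a b d)"
  proof (rule contracted)
    show "\<And>a b. ginv g x a b = ginv g x b a" by (rule ginv_sym[OF x])
    show "\<And>a c. Tm (ginv g x) a c = (\<Sum>f\<in>UNIV. ginv g x c f * Ricm f a)"
      using T_id[OF x] by (simp add: ric_Ricm)
    show "\<And>m a c. DTm (ginv g x) m a c = (\<Sum>f\<in>UNIV. dHm (ginv g x) m c f * Ricm f a + ginv g x c f * DRicm m f a)"
      using DT_id[OF x] by (simp add: ric_Ricm)
    show "\<And>a b. Ricm a b = Ricm b a" using ric_sym[OF x] by (simp add: ric_Ricm)
    show "\<And>m a b. DRicm m a b = DRicm m b a" by (rule DRic_sym[OF x])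
  qed
  then show ?thesis unfolding D_ric[OF x] D_scal[OF x] by (simp add: ric_Ricm)
qed

lemma div_Phi:
  assumes x: "x \<in> U"
  shows "(\<Sum>c\<in>UNIV. \<Sum>a\<in>UNIV. ginv g x c a * nablaPhi g x c a b) = 2 * pd b (Sc g) x"
proof -
  have Sc: "Sc g = (\<lambda>y. scal g y / 12)" by (rule ext) (simp add: Sc_def)
  have dSc: "pd b (Sc g) x = pd b (scal g) x / 12"
    unfolding Sc using pd_divc[OF scal_diff[OF x]] by (simp add: eta_contract_eq)
  have dPhi: "pd c (\<lambda>y. Phi g y a d) x = pd c (\<lambda>y. ric g y a d) x
      - (pd c (scal g) x * g x a d + scal g x * pd c (\<lambda>y. g y a d) x) / 3" for c a d
  proof -
    have d1: "(\<lambda>y. scal g y * g y a d) differentiable (at x)"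
      using scal_diff[OF x] g_diff[OF x] by (intro differentiable_mult) auto
    have d2: "(\<lambda>y. scal g y * g y a d / 3) differentiable (at x)"
      using d1 by (intro differentiable_divide) auto
    have "pd c (\<lambda>y. Phi g y a d) x = pd c (\<lambda>y. ric g y a d - scal g y * g y a d / 3) x"
      unfolding Phi_def ..
    also have "\<dots> = pd c (\<lambda>y. ric g y a d) x - pd c (\<lambda>y. scal g y * g y a d / 3) x"
      by (rule pd_diff[OF ric_diff[OF x] d2])
    also have "pd c (\<lambda>y. scal g y * g y a d / 3) x = pd c (\<lambda>y. scal g y * g y a d) x / 3"
      by (rule pd_divc[OF d1])
    also have "pd c (\<lambda>y. scal g y * g y a d) x = pd c (scal g) x * g x a d + scal g x * pd c (\<lambda>y. g y a d) x"
      using pd_mult[OF scal_diff[OF x] g_diff[OF x]] by (simp add: eta_contract_eq)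
    finally show ?thesis .
  qed
  have nab: "nablaPhi g x c a d = pd c (\<lambda>y. ric g y a d) x - (\<Sum>f\<in>UNIV. chr g x f c a * ric g x f d)
      - (\<Sum>f\<in>UNIV. chr g x f c d * ric g x a f) - pd c (scal g) x * g x a d / 3" for c a d
    unfolding nablaPhi_def dPhi unfolding metric_compat[OF x] Phi_def
    by (simp add: algebra_simps sum.distrib sum_subtractf sum_divide_distrib sum_distrib_left)
  have "(\<Sum>c\<in>UNIV. \<Sum>a\<in>UNIV. ginv g x c a * nablaPhi g x c a b)
     = (\<Sum>c\<in>UNIV. \<Sum>e\<in>UNIV. ginv g x c e * (pd c (\<lambda>y. ric g y e b) x
      - (\<Sum>f\<in>UNIV. chr g x f c e * ric g x f b) - (\<Sum>f\<in>UNIV. chr g x f c b * ric g x e f)))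
      - (\<Sum>c\<in>UNIV. pd c (scal g) x * (\<Sum>a\<in>UNIV. ginv g x c a * g x a b)) / 3"
    unfolding nab sum_3 by algebra
  also have "\<dots> = pd b (scal g) x / 2 - pd b (scal g) x / 3"
    using contracted_at[OF x, of b] by (simp add: inv_rel[OF x])
  finally show ?thesis using dSc by simp
qed

end


definition bf :: "(3 \<Rightarrow> 3 \<Rightarrow> complex) \<Rightarrow> complex^3 \<Rightarrow> complex^3 \<Rightarrow> complex" where
  "bf M u v = (\<Sum>a\<in>UNIV. \<Sum>b\<in>UNIV. M a b * u $ a * v $ b)"

lemma bf_sym: "(\<And>a b. M a b = M b a) \<Longrightarrow> bf M u v = bf M v u"
  unfolding bf_def sum_3 by (simp add: algebra_simps)

lemma bf_lin1: "bf M (a *s p + b *s q + c *s r) v = a * bf M p v + b * bf M q v + c * bf M r v"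
  unfolding bf_def sum_3 by (simp add: algebra_simps)

lemma bf_lin2: "bf M v (a *s p + b *s q + c *s r) = a * bf M v p + b * bf M v q + c * bf M v r"
  unfolding bf_def sum_3 by (simp add: algebra_simps)

lemma bf_diff1: "bf M (u - w) v = bf M u v - bf M w v"
  unfolding bf_def sum_3 by (simp add: algebra_simps)

lemma bf_scale1: "bf M (c *s u) v = c * bf M u v"
  unfolding bf_def sum_3 by (simp add: algebra_simps)

lemma bf_scale2: "bf M u (c *s v) = c * bf M u v"
  unfolding bf_def sum_3 by (simp add: algebra_simps)

lemma bf_zero1: "bf M 0 v = 0"
  unfolding bf_def by simp

lemma bf_matrix:
  fixes E :: "complex^3^3"
  shows "(E ** (\<chi> a b. M a b) ** transpose E) $ i $ j = bf M (E $ i) (E $ j)"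
  unfolding bf_def matrix_matrix_mult_def transpose_def
  apply (simp add: sum_distrib_right)
  apply (subst sum.swap)
  apply (simp add: mult_ac)
  done

lemma bf_mv:
  fixes E :: "complex^3^3"
  shows "(E *v ((\<chi> a b. M a b) *v w)) $ i = bf M (E $ i) w"
  unfolding bf_def matrix_vector_mult_def
  by (simp add: sum_distrib_left mult_ac)

lemma inj_zero:
  fixes A :: "complex^3^3"
  assumes "det A \<noteq> 0" "A *v w = 0"
  shows "w = 0"
proof -
  have "inj ((*v) A)" using assms(1) by (intro inj_matrix_vector_mult) (simp add: invertible_det_nz)
  moreover have "A *v 0 = 0" by simp
  ultimately show ?thesis using assms(2) by (metis injD)
qed

locale frame =
  fixes M :: "3 \<Rightarrow> 3 \<Rightarrow> complex" and k l n :: "complex^3"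
  assumes Ms: "\<And>a b. M a b = M b a"
    and Mdet: "det (\<chi> a b. M a b) \<noteq> 0"
    and kk: "bf M k k = 0" and ll: "bf M l l = 0" and kl: "bf M k l = 1"
    and kn: "bf M k n = 0" and ln: "bf M l n = 0" and nn: "bf M n n = - 1/2"
begin

lemma lk: "bf M l k = 1" by (subst bf_sym[OF Ms]) (rule kl)
lemma nk: "bf M n k = 0" by (subst bf_sym[OF Ms]) (rule kn)
lemma nl: "bf M n l = 0" by (subst bf_sym[OF Ms]) (rule ln)

lemma orth_zero:
  assumes "bf M w k = 0" "bf M w l = 0" "bf M w n = 0"
  shows "w = 0"
proof -
  let ?E = "vector [k, l, n] :: complex^3^3" and ?G = "(\<chi> a b. M a b) :: complex^3^3"
  have "det (?E ** ?G ** transpose ?E) = 1/2"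
    unfolding det_3 bf_matrix by (simp add: kk ll kl kn ln nn lk nk nl)
  then have "det ?E * det ?G * det ?E = 1/2" by (simp add: det_mul)
  then have dE: "det ?E \<noteq> 0" by auto
  have "?E *v (?G *v w) = 0"
    unfolding vec_eq_iff forall_3 bf_mv
    using assms bf_sym[OF Ms, where u = w] by simp
  then have "?G *v w = 0" by (rule inj_zero[OF dE])
  then show "w = 0" by (rule inj_zero[OF Mdet])
qed

lemma complete: "u = bf M u l *s k + bf M u k *s l + (- 2 * bf M u n) *s n"
proof -
  let ?w = "u - (bf M u l *s k + bf M u k *s l + (- 2 * bf M u n) *s n)"
  have "bf M ?w k = 0" "bf M ?w l = 0" "bf M ?w n = 0"
    unfolding bf_diff1 bf_lin1 by (simp_all add: kk ll kl kn ln nn lk nk nl)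
  then have "?w = 0" by (rule orth_zero)
  then show ?thesis by simp
qed

lemma expand1: "bf B u v = bf M u l * bf B k v + bf M u k * bf B l v - 2 * bf M u n * bf B n v"
proof -
  have "bf B u v = bf B (bf M u l *s k + bf M u k *s l + (- 2 * bf M u n) *s n) v"
    using complete[of u] by metis
  also have "\<dots> = bf M u l * bf B k v + bf M u k * bf B l v + (- 2 * bf M u n) * bf B n v"
    by (rule bf_lin1)
  finally show ?thesis by simp
qed

end


lemma diff_of_real:
  fixes f :: "pt \<Rightarrow> real"
  assumes "f differentiable (at x)"
  shows "(\<lambda>y. (of_real (f y) :: complex)) differentiable (at x)"
  using bounded_linear.has_derivative[OF bounded_linear_of_real assms[unfolded frechet_derivative_works]]
  unfolding differentiable_def by blast

lemma bf_axis: "bf M (axis a 1) v = (\<Sum>b\<in>UNIV. M a b * v $ b)"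
  unfolding bf_def axis_def sum_3 using exhaust_3[of a] by auto

context metric begin

definition "Gc y = (\<lambda>a b. complex_of_real (g y a b))"
definition "Fc y = (\<lambda>a b. complex_of_real (Phi g y a b))"

lemma gC_bf: "gC g y u v = bf (Gc y) u v" unfolding gC_def bf_def Gc_def ..
lemma PhiC_bf: "PhiC g y u v = bf (Fc y) u v" unfolding PhiC_def bf_def Fc_def ..

lemma Phi_sym: "y \<in> U \<Longrightarrow> Phi g y a b = Phi g y b a"
  unfolding Phi_def using ric_sym g_sym by simp

lemma Gc_sym: "y \<in> U \<Longrightarrow> Gc y a b = Gc y b a" unfolding Gc_def using g_sym by simp
lemma Fc_sym: "y \<in> U \<Longrightarrow> Fc y a b = Fc y b a" unfolding Fc_def using Phi_sym by simp

lemma Gc_det: "y \<in> U \<Longrightarrow> det (\<chi> a b. Gc y a b) \<noteq> 0"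
proof -
  assume y: "y \<in> U"
  have "det (\<chi> a b. Gc y a b) = complex_of_real (det (\<chi> a b. g y a b))"
    unfolding det_3 Gc_def by simp
  then show ?thesis using det_nz[OF y] by simp
qed

lemma trace_free:
  assumes y: "y \<in> U"
  shows "(\<Sum>a\<in>UNIV. \<Sum>b\<in>UNIV. ginv g y a b * Phi g y a b) = 0"
proof -
  have tr: "(\<Sum>a\<in>UNIV. \<Sum>b\<in>UNIV. ginv g y a b * g y a b) = 3"
  proof -
    have "(\<Sum>a\<in>UNIV. \<Sum>b\<in>UNIV. ginv g y a b * g y a b) = (\<Sum>a\<in>UNIV. \<Sum>b\<in>UNIV. ginv g y a b * g y b a)"
      using g_sym[OF y] by simp
    also have "\<dots> = (\<Sum>a\<in>(UNIV::3 set). 1)" by (simp add: inv_rel(2)[OF y])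
    finally show ?thesis by (simp add: sum_3)
  qed
  have "(\<Sum>a\<in>UNIV. \<Sum>b\<in>UNIV. ginv g y a b * Phi g y a b)
      = (\<Sum>a\<in>UNIV. \<Sum>b\<in>UNIV. ginv g y a b * ric g y a b) - scal g y / 3 * (\<Sum>a\<in>UNIV. \<Sum>b\<in>UNIV. ginv g y a b * g y a b)"
    unfolding Phi_def sum_3 by algebra
  then show ?thesis using tr by (simp add: scal_def)
qed

lemma inv_rel_c:
  assumes y: "y \<in> U"
  shows "(\<Sum>c\<in>UNIV. complex_of_real (ginv g y a c) * Gc y c d) = (if a = d then 1 else 0)"
proof -
  have "(\<Sum>c\<in>UNIV. complex_of_real (ginv g y a c) * Gc y c d) = complex_of_real (\<Sum>c\<in>UNIV. ginv g y a c * g y c d)"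
    unfolding Gc_def by simp
  then show ?thesis using inv_rel(2)[OF y] by simp
qed

lemma typeD_facts:
  assumes y: "y \<in> U" and T: "typeD_at g y kv lv"
  defines "l' \<equiv> (1 / gC g y kv lv) *s lv" and "\<alpha> \<equiv> PhiC g y kv lv / gC g y kv lv"
  obtains n where "frame (Gc y) kv l' n" "\<alpha> \<noteq> 0"
    "\<And>u. bf (Fc y) u kv = \<alpha> * bf (Gc y) u kv"
    "\<And>u. bf (Fc y) u l' = \<alpha> * bf (Gc y) u l'"
    "\<And>u. bf (Fc y) u n = - 2 * \<alpha> * bf (Gc y) u n"
    "\<And>a b. complex_of_real (ginv g y a b) = l' $ a * kv $ b + kv $ a * l' $ b - 2 * n $ a * n $ b"
proof -
  have ne: "gC g y kv lv \<noteq> 0" using T by (simp add: typeD_at_def)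
  obtain n where nf: "null_frame g y kv l' n"
    and P: "PhiC g y kv kv / 2 = 0" "PhiC g y kv n / 2 = 0" "PhiC g y l' n / 2 = 0"
      "PhiC g y l' l' / 2 = 0" "PhiC g y kv l' / 2 \<noteq> 0"
    using T unfolding typeD_at_def Let_def l'_def by blast
  interpret frame "Gc y" kv l' n
    using nf unfolding null_frame_def gC_bf
    by unfold_locales (auto intro: Gc_sym[OF y] simp: Gc_det[OF y])
  have Fs: "\<And>u v. bf (Fc y) u v = bf (Fc y) v u" using bf_sym Fc_sym[OF y] by blast
  have al: "bf (Fc y) kv l' = \<alpha>"
    unfolding l'_def \<alpha>_def bf_scale2 PhiC_bf gC_bf by simp
  have F: "bf (Fc y) kv kv = 0" "bf (Fc y) kv n = 0" "bf (Fc y) l' n = 0" "bf (Fc y) l' l' = 0"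
    using P unfolding PhiC_bf by simp_all
  have anz: "\<alpha> \<noteq> 0" using P(5) al unfolding PhiC_bf by simp
  have E1: "bf (Fc y) u kv = \<alpha> * bf (Gc y) u kv" for u
    using expand1[of "Fc y" u kv] F al Fs[of l' kv] Fs[of n kv] by simp
  have E2: "bf (Fc y) u l' = \<alpha> * bf (Gc y) u l'" for u
    using expand1[of "Fc y" u l'] F al Fs[of n l'] by simp
  have Hc: "complex_of_real (ginv g y a b) = l' $ a * kv $ b + kv $ a * l' $ b - 2 * n $ a * n $ b" for a b
  proof -
    let ?M = "\<lambda>d b. l' $ d * kv $ b + kv $ d * l' $ b - 2 * n $ d * n $ b"
    have ax: "(if b = c then 1 else 0) = (\<Sum>d\<in>UNIV. Gc y c d * ?M d b)" for c b
    proof -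
      have "axis c 1 $ b = (bf (Gc y) (axis c 1) l' *s kv + bf (Gc y) (axis c 1) kv *s l' + (- 2 * bf (Gc y) (axis c 1) n) *s n) $ b"
        using complete[of "axis c 1"] by metis
      then have "(if b = c then 1 else 0) = (\<Sum>d\<in>UNIV. Gc y c d * l' $ d) * kv $ b + (\<Sum>d\<in>UNIV. Gc y c d * kv $ d) * l' $ b
          - 2 * (\<Sum>d\<in>UNIV. Gc y c d * n $ d) * n $ b"
        unfolding bf_axis by (simp add: axis_def)
      then show ?thesis unfolding sum_3 by (simp add: algebra_simps)
    qed
    have "complex_of_real (ginv g y a b) = (\<Sum>c\<in>UNIV. complex_of_real (ginv g y a c) * (if b = c then 1 else 0))"
      using exhaust_3[of b] by (auto simp: sum_3)
    also have "\<dots> = (\<Sum>c\<in>UNIV. complex_of_real (ginv g y a c) * (\<Sum>d\<in>UNIV. Gc y c d * ?M d b))"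
      by (simp only: ax)
    also have "\<dots> = (\<Sum>d\<in>UNIV. (\<Sum>c\<in>UNIV. complex_of_real (ginv g y a c) * Gc y c d) * ?M d b)"
      unfolding sum_3 by (simp add: algebra_simps)
    also have "\<dots> = ?M a b" using exhaust_3[of a] by (simp add: inv_rel_c[OF y] sum_3) auto
    finally show ?thesis .
  qed
  have nn': "bf (Fc y) n n = \<alpha>"
  proof -
    have "0 = complex_of_real (\<Sum>a\<in>UNIV. \<Sum>b\<in>UNIV. ginv g y a b * Phi g y a b)"
      using trace_free[OF y] by simp
    also have "\<dots> = (\<Sum>a\<in>UNIV. \<Sum>b\<in>UNIV. complex_of_real (ginv g y a b) * Fc y a b)"
      unfolding Fc_def by simp
    also have "\<dots> = bf (Fc y) l' kv + bf (Fc y) kv l' - 2 * bf (Fc y) n n"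
      unfolding Hc bf_def sum_3 by algebra
    finally show ?thesis using al Fs[of l' kv] by simp
  qed
  have E4: "bf (Fc y) u n = - 2 * \<alpha> * bf (Gc y) u n" for u
    using expand1[of "Fc y" u n] F nn' Fs[of kv n] by simp
  show ?thesis using that[OF frame_axioms anz E1 E2 E4 Hc] .
qed

end


context metric begin

definition Dv :: "(pt \<Rightarrow> complex^3) \<Rightarrow> pt \<Rightarrow> 3 \<Rightarrow> complex^3" where
  "Dv Y x c = (\<chi> b. pd c (\<lambda>y. Y y $ b) x + (\<Sum>e\<in>UNIV. complex_of_real (chr g x b c e) * Y x $ e))"

lemma covD_Dv: "covD g X Y x = (\<chi> c. \<Sum>a\<in>UNIV. X x $ a * Dv Y x a $ c)"
  unfolding covD_def Dv_def by simp

lemma g_diffC: "y \<in> U \<Longrightarrow> (\<lambda>z. complex_of_real (g z a b)) differentiable (at y)"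
  by (rule diff_of_real[OF g_diff])
lemma Phi_diffC: "y \<in> U \<Longrightarrow> (\<lambda>z. complex_of_real (Phi g z a b)) differentiable (at y)"
  by (rule diff_of_real[OF Phi_diff])

lemma leibniz:
  assumes x: "x \<in> U" and dY: "\<And>b. (\<lambda>y. Y y $ b) differentiable (at x)"
    and dW: "\<And>b. (\<lambda>y. W y $ b) differentiable (at x)"
  shows "pd c (\<lambda>y. gC g y (Y y) (W y)) x = bf (Gc x) (Dv Y x c) (W x) + bf (Gc x) (Y x) (Dv W x c)"
proof -
  have "pd c (\<lambda>y. gC g y (Y y) (W y)) x = (\<Sum>a\<in>UNIV. \<Sum>b\<in>UNIV.
      (complex_of_real (pd c (\<lambda>y. g y a b) x) * Y x $ a + complex_of_real (g x a b) * pd c (\<lambda>y. Y y $ a) x) * W x $ b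
      + complex_of_real (g x a b) * Y x $ a * pd c (\<lambda>y. W y $ b) x)"
    unfolding gC_def using x dY dW
    by (simp add: pd_sum pd_mult pd_of_real g_diff g_diffC)
  also have "\<dots> = bf (Gc x) (Dv Y x c) (W x) + bf (Gc x) (Y x) (Dv W x c)"
    unfolding metric_compat[OF x] bf_def Dv_def Gc_def sum_3
    by (simp add: algebra_simps)
  finally show ?thesis .
qed

lemma F_zero:
  assumes y: "y \<in> U" and T: "typeD_at g y kv lv"
  shows "(\<Sum>b\<in>UNIV. Fc y a b * kv $ b) = PhiC g y kv lv / gC g y kv lv * (\<Sum>b\<in>UNIV. Gc y a b * kv $ b)"
proof -
  obtain n where E1: "\<And>u. bf (Fc y) u kv = PhiC g y kv lv / gC g y kv lv * bf (Gc y) u kv"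
    using typeD_facts[OF y T] by blast
  show ?thesis using E1[of "axis a 1"] unfolding bf_axis .
qed

end

locale kfield = metric +
  fixes kf lf :: "pt \<Rightarrow> complex^3"
  assumes kd: "\<And>y b. y \<in> U \<Longrightarrow> (\<lambda>z. kf z $ b) differentiable (at y)"
    and ld: "\<And>y b. y \<in> U \<Longrightarrow> (\<lambda>z. lf z $ b) differentiable (at y)"
    and TD: "\<And>y. y \<in> U \<Longrightarrow> typeD_at g y (kf y) (lf y)"
begin

definition "\<alpha> y = PhiC g y (kf y) (lf y) / gC g y (kf y) (lf y)"

lemma alpha_diff:
  assumes x: "x \<in> U"
  shows "\<alpha> differentiable (at x)"
proof -
  have ne: "gC g x (kf x) (lf x) \<noteq> 0" using TD[OF x] by (simp add: typeD_at_def)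
  have "(\<lambda>y. PhiC g y (kf y) (lf y) / gC g y (kf y) (lf y)) differentiable (at x)"
    unfolding PhiC_def gC_def using ne[unfolded gC_def] x
    by (intro differentiable_divide differentiable_sum differentiable_mult ballI Phi_diffC g_diffC kd ld) auto
  then show ?thesis unfolding \<alpha>_def[abs_def] .
qed

lemma D_identity:
  assumes x: "x \<in> U"
  shows "(\<Sum>b\<in>UNIV. complex_of_real (nablaPhi g x c a b) * kf x $ b)
    = pd c \<alpha> x * (\<Sum>b\<in>UNIV. Gc x a b * kf x $ b) + (\<Sum>b\<in>UNIV. (\<alpha> x * Gc x a b - Fc x a b) * Dv kf x c $ b)"
proof -
  have Fz: "\<And>y a. y \<in> U \<Longrightarrow> (\<Sum>b\<in>UNIV. Fc y a b * kf y $ b) - \<alpha> y * (\<Sum>b\<in>UNIV. Gc y a b * kf y $ b) = 0"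
    using F_zero TD unfolding \<alpha>_def by simp
  have "pd c (\<lambda>y. (\<Sum>b\<in>UNIV. Fc y a b * kf y $ b) - \<alpha> y * (\<Sum>b\<in>UNIV. Gc y a b * kf y $ b)) x = 0"
    by (rule pd_zero_on[OF opn x Fz])
  then have S1: "(\<Sum>b\<in>UNIV. complex_of_real (pd c (\<lambda>y. Phi g y a b) x) * kf x $ b + Fc x a b * pd c (\<lambda>y. kf y $ b) x)
     - (pd c \<alpha> x * (\<Sum>b\<in>UNIV. Gc x a b * kf x $ b) + \<alpha> x * (\<Sum>b\<in>UNIV. complex_of_real (pd c (\<lambda>y. g y a b) x) * kf x $ b
        + Gc x a b * pd c (\<lambda>y. kf y $ b) x)) = 0"
    unfolding Fc_def Gc_def using x
    by (simp add: pd_sum pd_mult pd_diff pd_of_real Phi_diff g_diff Phi_diffC g_diffC kd alpha_diff)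
  have S2: "(\<Sum>b\<in>UNIV. complex_of_real (nablaPhi g x c a b) * kf x $ b)
     = (\<Sum>b\<in>UNIV. complex_of_real (pd c (\<lambda>y. Phi g y a b) x) * kf x $ b)
       - (\<Sum>e\<in>UNIV. complex_of_real (chr g x e c a) * (\<Sum>b\<in>UNIV. Fc x e b * kf x $ b))
       - (\<Sum>b\<in>UNIV. \<Sum>e\<in>UNIV. complex_of_real (chr g x e c b) * Fc x a e * kf x $ b)"
    unfolding nablaPhi_def Fc_def sum_3 by (simp add: algebra_simps)
  have S3: "(\<Sum>b\<in>UNIV. Fc x e b * kf x $ b) = \<alpha> x * (\<Sum>b\<in>UNIV. Gc x e b * kf x $ b)" for e
    using Fz[OF x, of e] by simp
  show ?thesis
    using S1 unfolding S2 S3 unfolding metric_compat[OF x] Dv_def Gc_def sum_3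
    by (simp add: algebra_simps)
qed

end


context kfield begin

definition "nabv x v = (\<Sum>c\<in>UNIV. v $ c *s Dv kf x c)"

lemma bf_nabv2: "bf M w (nabv x v) = (\<Sum>c\<in>UNIV. v $ c * bf M w (Dv kf x c))"
  unfolding nabv_def bf_def sum_3 by (simp add: algebra_simps)

lemma nabv_lin: "nabv x (a *s p + b *s q + c *s r) = a *s nabv x p + b *s nabv x q + c *s nabv x r"
  unfolding nabv_def sum_3 by (simp add: vec_eq_iff algebra_simps)

lemma A_contract: "(\<Sum>c\<in>UNIV. \<Sum>a\<in>UNIV. v $ c * w $ a * (\<Sum>d\<in>UNIV. M a d * Dv kf x c $ d)) = bf M w (nabv x v)"
  unfolding nabv_def bf_def sum_3 by (simp add: algebra_simps)

lemma A_contract1: "(\<Sum>b\<in>UNIV. v $ b * (\<Sum>d\<in>UNIV. M c d * Dv kf x b $ d)) = (\<Sum>d\<in>UNIV. M c d * nabv x v $ d)"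
  unfolding nabv_def sum_3 by (simp add: algebra_simps)

lemma null_deriv:
  assumes x: "x \<in> U" and N: "\<And>y. y \<in> U \<Longrightarrow> gC g y (kf y) (kf y) = 0"
  shows "bf (Gc x) (kf x) (Dv kf x c) = 0"
proof -
  have "pd c (\<lambda>y. gC g y (kf y) (kf y)) x = 0" by (rule pd_zero_on[OF opn x N])
  then have "bf (Gc x) (Dv kf x c) (kf x) + bf (Gc x) (kf x) (Dv kf x c) = 0"
    using leibniz[OF x kd[OF x] kd[OF x], of c] by simp
  moreover have "bf (Gc x) (Dv kf x c) (kf x) = bf (Gc x) (kf x) (Dv kf x c)"
    by (rule bf_sym) (rule Gc_sym[OF x])
  ultimately show ?thesis by simp
qed

lemma bf_Mx: "bf (\<lambda>a d. c * G a d - F a d) w v = c * bf G w v - bf F w v"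
  unfolding bf_def sum_3 by (simp add: algebra_simps)

lemma key:
  assumes x: "x \<in> U" and N: "\<And>y. y \<in> U \<Longrightarrow> gC g y (kf y) (kf y) = 0"
    and C: "\<And>c. (\<Sum>a\<in>UNIV. \<Sum>b\<in>UNIV. kf x $ a * kf x $ b *
           complex_of_real (cotton g x a b c + 3 * g x b c * pd a (Sc g) x)) = 0"
  obtains n where "frame (Gc x) (kf x) ((1 / gC g x (kf x) (lf x)) *s lf x) n"
    "bf (Gc x) n (nabv x (kf x)) = 0" "bf (Gc x) n (nabv x n) = 0"
proof -
  let ?K = "kf x" and ?G = "Gc x" and ?F = "Fc x" and ?l = "(1 / gC g x (kf x) (lf x)) *s lf x"
  have al: "PhiC g x (kf x) (lf x) / gC g x (kf x) (lf x) = \<alpha> x" by (simp add: \<alpha>_def)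
  obtain n where fr: "frame ?G ?K ?l n" and anz: "\<alpha> x \<noteq> 0"
    and E1: "\<And>u. bf ?F u ?K = \<alpha> x * bf ?G u ?K"
    and E2: "\<And>u. bf ?F u ?l = \<alpha> x * bf ?G u ?l"
    and E4: "\<And>u. bf ?F u n = - 2 * \<alpha> x * bf ?G u n"
    and Hc: "\<And>a b. complex_of_real (ginv g x a b) = ?l $ a * ?K $ b + ?K $ a * ?l $ b - 2 * n $ a * n $ b"
    using typeD_facts[OF x TD[OF x]] unfolding al by blast
  interpret frame ?G ?K ?l n by (rule fr)
  have Fs: "\<And>u v. bf ?F u v = bf ?F v u" using bf_sym Fc_sym[OF x] by blast
  have Gs: "\<And>u v. bf ?G u v = bf ?G v u" using bf_sym Gc_sym[OF x] by blast
  define A where "A c a = (\<Sum>b\<in>UNIV. complex_of_real (nablaPhi g x c a b) * ?K $ b)" for c a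
  have AD: "A c a = pd c \<alpha> x * (\<Sum>b\<in>UNIV. ?G a b * ?K $ b) + (\<Sum>d\<in>UNIV. (\<alpha> x * ?G a d - ?F a d) * Dv kf x c $ d)" for c a
    unfolding A_def by (rule D_identity[OF x])
  define kS where "kS = (\<Sum>a\<in>UNIV. ?K $ a * complex_of_real (pd a (Sc g) x))"
  define k\<alpha> where "k\<alpha> = (\<Sum>a\<in>UNIV. ?K $ a * pd a \<alpha> x)"
  let ?nK = "nabv x ?K"
  have gss: "\<And>a b. g x a b = g x b a" using g_sym[OF x] by blast
  have V: "- (\<Sum>b\<in>UNIV. ?K $ b * A b c) + (\<Sum>b\<in>UNIV. ?K $ b * A c b)
      + bf ?G ?K ?K * complex_of_real (pd c (Sc g) x) + 2 * (\<Sum>b\<in>UNIV. ?G c b * ?K $ b) * kS = 0" for c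
  proof -
    have "(\<Sum>a\<in>UNIV. \<Sum>b\<in>UNIV. ?K $ a * ?K $ b * complex_of_real (cotton g x a b c + 3 * g x b c * pd a (Sc g) x))
      = - (\<Sum>b\<in>UNIV. ?K $ b * A b c) + (\<Sum>b\<in>UNIV. ?K $ b * A c b)
      + bf ?G ?K ?K * complex_of_real (pd c (Sc g) x) + 2 * (\<Sum>b\<in>UNIV. ?G c b * ?K $ b) * kS"
      unfolding cotton_def A_def kS_def bf_def Gc_def sum_3
      by (simp add: gss[of _ c] algebra_simps)
    then show ?thesis using C[of c] by simp
  qed
  have I1: "(\<Sum>b\<in>UNIV. ?K $ b * A c b) = 0" for c
  proof -
    have "(\<Sum>b\<in>UNIV. ?K $ b * A c b) = pd c \<alpha> x * bf ?G ?K ?K + bf (\<lambda>a d. \<alpha> x * ?G a d - ?F a d) ?K (Dv kf x c)"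
      unfolding AD bf_def sum_3 by (simp add: algebra_simps)
    also have "\<dots> = 0" unfolding bf_Mx kk
      using E1[of "Dv kf x c"] Fs[of ?K "Dv kf x c"] Gs[of "Dv kf x c" ?K] by simp
    finally show ?thesis .
  qed
  have I2: "(\<Sum>b\<in>UNIV. ?K $ b * A b c) = k\<alpha> * (\<Sum>b\<in>UNIV. ?G c b * ?K $ b) + (\<Sum>d\<in>UNIV. (\<alpha> x * ?G c d - ?F c d) * ?nK $ d)" for c
    unfolding AD k\<alpha>_def nabv_def sum_3 by (simp add: algebra_simps)
  have V2: "- (k\<alpha> * (\<Sum>b\<in>UNIV. ?G c b * ?K $ b) + (\<Sum>d\<in>UNIV. (\<alpha> x * ?G c d - ?F c d) * ?nK $ d))
      + 2 * (\<Sum>b\<in>UNIV. ?G c b * ?K $ b) * kS = 0" for c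
    using V[of c] unfolding I1 I2 kk by simp
  have contr: "(\<Sum>c\<in>UNIV. w $ c * (- (k\<alpha> * (\<Sum>b\<in>UNIV. ?G c b * ?K $ b) + (\<Sum>d\<in>UNIV. (\<alpha> x * ?G c d - ?F c d) * ?nK $ d))
      + 2 * (\<Sum>b\<in>UNIV. ?G c b * ?K $ b) * kS))
      = - (k\<alpha> * bf ?G w ?K + (\<alpha> x * bf ?G w ?nK - bf ?F w ?nK)) + 2 * bf ?G w ?K * kS" for w
    unfolding bf_def sum_3 by (simp add: algebra_simps)
  have "- (k\<alpha> * bf ?G n ?K + (\<alpha> x * bf ?G n ?nK - bf ?F n ?nK)) + 2 * bf ?G n ?K * kS = 0"
    using contr[of n] V2 by simp
  then have "3 * \<alpha> x * bf ?G n ?nK = 0"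
    using E4[of ?nK] Fs[of n ?nK] Gs[of ?nK n] nk by (simp add: algebra_simps)
  then have N1: "bf ?G n ?nK = 0" using anz by simp
  have "- (k\<alpha> * bf ?G ?l ?K + (\<alpha> x * bf ?G ?l ?nK - bf ?F ?l ?nK)) + 2 * bf ?G ?l ?K * kS = 0"
    using contr[of ?l] V2 by simp
  then have kal: "k\<alpha> = 2 * kS"
    using E2[of ?nK] Fs[of ?l ?nK] Gs[of ?nK ?l] lk by (simp add: algebra_simps)
  define B where "B = (\<Sum>c\<in>UNIV. \<Sum>a\<in>UNIV. complex_of_real (ginv g x c a) * A c a)"
  have B1: "B = 2 * kS"
  proof -
    have "B = (\<Sum>b\<in>UNIV. ?K $ b * complex_of_real (\<Sum>c\<in>UNIV. \<Sum>a\<in>UNIV. ginv g x c a * nablaPhi g x c a b))"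
      unfolding B_def A_def sum_3 by (simp add: algebra_simps)
    also have "\<dots> = 2 * kS" unfolding div_Phi[OF x] unfolding kS_def sum_3 by (simp add: algebra_simps)
    finally show ?thesis .
  qed
  let ?M = "\<lambda>a d. \<alpha> x * ?G a d - ?F a d"
  have B2: "B = (\<Sum>c\<in>UNIV. ?l $ c * pd c \<alpha> x) * bf ?G ?K ?K + k\<alpha> * bf ?G ?l ?K
      - 2 * (\<Sum>c\<in>UNIV. n $ c * pd c \<alpha> x) * bf ?G n ?K
      + bf ?M ?K (nabv x ?l) + bf ?M ?l ?nK - 2 * bf ?M n (nabv x n)"
    unfolding B_def Hc AD k\<alpha>_def nabv_def bf_def sum_3 by (simp add: algebra_simps)
  have "B = k\<alpha> - 6 * \<alpha> x * bf ?G n (nabv x n)"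
    unfolding B2 bf_Mx kk lk nk
    using E1[of "nabv x ?l"] E2[of ?nK] E4[of "nabv x n"] Fs Gs by (simp add: algebra_simps)
  then have "6 * \<alpha> x * bf ?G n (nabv x n) = 0" using B1 kal by simp
  then have N2: "bf ?G n (nabv x n) = 0" using anz by simp
  show ?thesis using that[OF fr N1 N2] .
qed

lemma vfield_diff: "vfield U X \<Longrightarrow> x \<in> U \<Longrightarrow> (\<lambda>y. X y $ c) differentiable (at x)"
  unfolding vfield_def using smooth_on_D(1) diff_on_at opn by blast

lemma bf_covD: "bf M (covD g X Y x) w = (\<Sum>a\<in>UNIV. X x $ a * bf M (Dv Y x a) w)"
  unfolding covD_Dv bf_def sum_3 by (simp add: algebra_simps)

lemma cogeo:
  assumes N: "\<And>y. y \<in> U \<Longrightarrow> gC g y (kf y) (kf y) = 0"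
    and C: "\<forall>x\<in>U. \<forall>c. (\<Sum>a\<in>UNIV. \<Sum>b\<in>UNIV. kf x $ a * kf x $ b *
           complex_of_real (cotton g x a b c + 3 * g x b c * pd a (Sc g) x)) = 0"
  shows "co_geodetic U g kf"
  unfolding co_geodetic_def
proof (intro allI impI ballI)
  fix X Y Z x
  assume H: "vfield U X \<and> vfield U Y \<and> vfield U Z \<and> (\<forall>x\<in>U. gC g x (X x) (kf x) = 0) \<and>
        (\<forall>x\<in>U. gC g x (Y x) (kf x) = 0) \<and> (\<forall>x\<in>U. \<exists>c. Z x = c *s kf x)"
    and x: "x \<in> U"
  let ?K = "kf x" and ?G = "Gc x" and ?l = "(1 / gC g x (kf x) (lf x)) *s lf x"
  obtain cz where Z: "Z x = cz *s ?K" using H x by blast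
  obtain n where fr: "frame ?G ?K ?l n" and N1: "bf ?G n (nabv x ?K) = 0" and N2: "bf ?G n (nabv x n) = 0"
    using key[OF x N] C x by blast
  interpret frame ?G ?K ?l n by (rule fr)
  have hX: "bf ?G (X x) ?K = 0" and hY: "bf ?G (Y x) ?K = 0" using H x unfolding gC_bf by auto
  have dY: "\<And>b. (\<lambda>y. Y y $ b) differentiable (at x)" using H vfield_diff x by blast
  have L: "bf ?G (Dv Y x a) ?K = - bf ?G (Y x) (Dv kf x a)" for a
  proof -
    have "pd a (\<lambda>y. gC g y (Y y) (kf y)) x = 0"
      by (rule pd_zero_on[OF opn x]) (use H in auto)
    then show ?thesis using leibniz[OF x dY kd[OF x], of a] by (simp add: eq_neg_iff_add_eq_0)
  qed
  have K0: "bf ?G ?K (nabv x v) = 0" for v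
    unfolding bf_nabv2 using null_deriv[OF x N] by simp
  have "gC g x (covD g X Y x) (Z x) = - cz * bf ?G (Y x) (nabv x (X x))"
    unfolding gC_bf Z bf_scale2 bf_covD L bf_nabv2 by (simp add: sum_negf)
  also have "bf ?G (Y x) (nabv x (X x)) = 0"
  proof -
    have Yx: "Y x = bf ?G (Y x) ?l *s ?K + 0 *s ?l + (- 2 * bf ?G (Y x) n) *s n"
      using complete[of "Y x"] hY by simp
    have Xx: "X x = bf ?G (X x) ?l *s ?K + 0 *s ?l + (- 2 * bf ?G (X x) n) *s n"
      using complete[of "X x"] hX by simp
    show ?thesis
      apply (subst Yx, subst Xx)
      unfolding nabv_lin bf_lin1 bf_lin2 using K0 N1 N2 by simp
  qed
  finally show "gC g x (covD g X Y x) (Z x) = 0" by simp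
qed

end


context metric begin

lemma typeD_swap:
  assumes y: "y \<in> U" and T: "typeD_at g y kv lv"
  shows "typeD_at g y lv kv"
proof -
  let ?G = "Gc y" and ?F = "Fc y"
  have Gs: "\<And>u v. bf ?G u v = bf ?G v u" using bf_sym Gc_sym[OF y] by blast
  have Fs: "\<And>u v. bf ?F u v = bf ?F v u" using bf_sym Fc_sym[OF y] by blast
  define c where "c = 1 / bf ?G kv lv"
  define c' where "c' = 1 / bf ?G lv kv"
  have ne: "bf ?G kv lv \<noteq> 0" using T by (simp add: typeD_at_def gC_bf)
  have cne: "c \<noteq> 0" "c' \<noteq> 0" using ne Gs[of lv kv] by (auto simp: c_def c'_def)
  obtain n where nf: "null_frame g y kv (c *s lv) n"
    and P: "PhiC g y kv kv / 2 = 0" "PhiC g y kv n / 2 = 0" "PhiC g y (c *s lv) n / 2 = 0"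
      "PhiC g y (c *s lv) (c *s lv) / 2 = 0" "PhiC g y kv (c *s lv) / 2 \<noteq> 0"
    using T unfolding typeD_at_def Let_def c_def gC_bf by blast
  have f: "bf ?G kv kv = 0" "bf ?G lv lv = 0" "bf ?G kv n = 0" "bf ?G lv n = 0" "bf ?G n n = - 1/2"
    using nf cne unfolding null_frame_def gC_bf by (auto simp: bf_scale1 bf_scale2)
  have p: "bf ?F kv kv = 0" "bf ?F kv n = 0" "bf ?F lv n = 0" "bf ?F lv lv = 0" "bf ?F kv lv \<noteq> 0"
    using P cne unfolding PhiC_bf by (auto simp: bf_scale1 bf_scale2)
  have "null_frame g y lv (c' *s kv) n"
    unfolding null_frame_def gC_bf using f ne Gs[of lv kv] Gs[of kv n]
    by (simp add: bf_scale1 bf_scale2 c'_def)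
  moreover have "PhiC g y lv lv / 2 = 0" "PhiC g y lv n / 2 = 0" "PhiC g y (c' *s kv) n / 2 = 0"
      "PhiC g y (c' *s kv) (c' *s kv) / 2 = 0" "PhiC g y lv (c' *s kv) / 2 \<noteq> 0"
    unfolding PhiC_bf using p cne Fs[of lv kv] by (auto simp: bf_scale1 bf_scale2)
  ultimately show ?thesis
    unfolding typeD_at_def Let_def using ne Gs[of lv kv] by (auto simp: gC_bf c'_def)
qed

end

theorem mainTheorem7:
  fixes U :: "(real^3) set" and g :: "real^3 \<Rightarrow> 3 \<Rightarrow> 3 \<Rightarrow> real"
    and k l :: "real^3 \<Rightarrow> complex^3"
  assumes "metric_on U g"
    and "null_generator U g k" and "null_generator U g l"
    and "\<forall>x\<in>U. typeD_at g x (k x) (l x)"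
    and "\<forall>x\<in>U. \<forall>c. (\<Sum>a\<in>UNIV. \<Sum>b\<in>UNIV. k x $ a * k x $ b *
           complex_of_real (cotton g x a b c + 3 * g x b c * pd a (Sc g) x)) = 0"
    and "\<forall>x\<in>U. \<forall>c. (\<Sum>a\<in>UNIV. \<Sum>b\<in>UNIV. l x $ a * l x $ b *
           complex_of_real (cotton g x a b c + 3 * g x b c * pd a (Sc g) x)) = 0"
  shows "co_geodetic U g k \<and> co_geodetic U g l"
proof -
  interpret metric U g by unfold_locales (rule assms(1))
  have vk: "vfield U k" and vl: "vfield U l" and Nk: "\<And>y. y \<in> U \<Longrightarrow> gC g y (k y) (k y) = 0"
    and Nl: "\<And>y. y \<in> U \<Longrightarrow> gC g y (l y) (l y) = 0"
    using assms(2,3) by (auto simp: null_generator_def)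
  have dk: "\<And>y b. y \<in> U \<Longrightarrow> (\<lambda>z. k z $ b) differentiable (at y)"
    and dl: "\<And>y b. y \<in> U \<Longrightarrow> (\<lambda>z. l z $ b) differentiable (at y)"
    using vk vl unfolding vfield_def using smooth_on_D(1) diff_on_at opn by blast+
  interpret K: kfield U g k l by unfold_locales (use dk dl assms(4) in auto)
  interpret L: kfield U g l k by unfold_locales (use dk dl assms(4) typeD_swap in auto)
  show ?thesis using K.cogeo[OF Nk assms(5)] L.cogeo[OF Nl assms(6)] by simp
qed


end
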